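(* Let $X$ be an infinite dimensional Banach lattice. Then $\delta(X_U)=\delta(X)$ and $\sigma(X_L)=\sigma(X)$.
   Context: Banach lattices are real; disjoint means $|x|\wedge|y|=0$. Upper (resp. lower) $p$-estimate: there is $M$ with $\|\sum x_i\|\le M(\sum\|x_i\|^p)^{1/p}$ (resp. $(\sum\|x_i\|^p)^{1/p}\le M\|\sum x_i\|$) for all finite families of pairwise disjoint elements. $\delta(X):=\sup\{p\ge1:$ upper $p$-estimate$\}$, $\sigma(X):=\inf\{q\ge1:$ lower $q$-estimate$\}$. $\mathfrak B_n(X)$ is the set of $n$-tuples of pairwise disjoint norm-one elements of $X$. For $a\in\mathbb R^n$: $\|a\|_{X_U(n)}:=\sup\{\|\sum_{i=1}^n a_ix_i\|_X:(x_i)\in\mathfrak B_n(X)\}$; $\Phi_n(a):=\inf\{\|\sum_{i=1}^n a_ix_i\|_X:(x_i)\in\mathfrak B_n(X)\}$; $\|a\|_{X_L(n)}:=\inf\{\sum_{k\in F}\Phi_n(a^k): F\text{ finite}, a^k\in\mathbb R^n, a=\sum_{k\in F}a^k\}$. $X_U$ (resp. $X_L$) is the space of real sequences $a$ with $\|a\|_{X_U}:=\sup_n\|(a_i)_{i=1}^n\|_{X_U(n)}<\infty$ (resp. $\|a\|_{X_L}:=\sup_n\|(a_i)_{i=1}^n\|_{X_L(n)}<\infty$), regarded as Banach lattices with coordinate-wise order. *)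

theory Defs
  imports "HOL-Analysis.Analysis" "HOL-Library.Function_Algebras"
begin

definition lat_abs :: "'v::{lattice,uminus} \<Rightarrow> 'v" where
  "lat_abs x = sup x (- x)"

definition banach_lattice :: "'a::{banach,lattice} itself \<Rightarrow> bool" where
  "banach_lattice _ \<longleftrightarrow>
     (\<forall>x y z::'a. x \<le> y \<longrightarrow> x + z \<le> y + z) \<and>
     (\<forall>(x::'a) y (c::real). x \<le> y \<and> 0 \<le> c \<longrightarrow> c *\<^sub>R x \<le> c *\<^sub>R y) \<and>
     (\<forall>x y::'a. lat_abs x \<le> lat_abs y \<longrightarrow> norm x \<le> norm y)"

definition infinite_dimensional :: "'a::real_vector itself \<Rightarrow> bool" where
  "infinite_dimensional _ \<longleftrightarrow> \<not> (\<exists>B::'a set. finite B \<and> span B = UNIV)"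

definition ldisj :: "'v::{lattice,uminus,zero} \<Rightarrow> 'v \<Rightarrow> bool" where
  "ldisj x y \<longleftrightarrow> inf (lat_abs x) (lat_abs y) = 0"

definition pw_disj :: "nat \<Rightarrow> (nat \<Rightarrow> 'v::{lattice,uminus,zero}) \<Rightarrow> bool" where
  "pw_disj n x \<longleftrightarrow> (\<forall>i<n. \<forall>j<n. i \<noteq> j \<longrightarrow> ldisj (x i) (x j))"

text \<open>A Banach lattice is given by a carrier S (a set of elements of an ambient
  lattice-ordered group) and a norm function N on it.\<close>

definition upper_est :: "'v::{lattice,ab_group_add} set \<Rightarrow> ('v \<Rightarrow> real) \<Rightarrow> real \<Rightarrow> bool" where
  "upper_est S N p \<longleftrightarrow> (\<exists>M. \<forall>n x. (\<forall>i<n. x i \<in> S) \<and> pw_disj n x \<longrightarrow>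
      N (\<Sum>i<n. x i) \<le> M * (\<Sum>i<n. N (x i) powr p) powr (1 / p))"

definition lower_est :: "'v::{lattice,ab_group_add} set \<Rightarrow> ('v \<Rightarrow> real) \<Rightarrow> real \<Rightarrow> bool" where
  "lower_est S N q \<longleftrightarrow> (\<exists>M. \<forall>n x. (\<forall>i<n. x i \<in> S) \<and> pw_disj n x \<longrightarrow>
      (\<Sum>i<n. N (x i) powr q) powr (1 / q) \<le> M * N (\<Sum>i<n. x i))"

definition delta_ind :: "'v::{lattice,ab_group_add} set \<Rightarrow> ('v \<Rightarrow> real) \<Rightarrow> ereal" where
  "delta_ind S N = Sup {ereal p | p. 1 \<le> p \<and> upper_est S N p}"

definition sigma_ind :: "'v::{lattice,ab_group_add} set \<Rightarrow> ('v \<Rightarrow> real) \<Rightarrow> ereal" where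
  "sigma_ind S N = Inf {ereal q | q. 1 \<le> q \<and> lower_est S N q}"

definition Bn :: "'a::{banach,lattice} itself \<Rightarrow> nat \<Rightarrow> (nat \<Rightarrow> 'a) set" where
  "Bn _ n = {x. (\<forall>i<n. norm (x i) = 1) \<and> pw_disj n x}"

definition XU_n :: "'a::{banach,lattice} itself \<Rightarrow> nat \<Rightarrow> (nat \<Rightarrow> real) \<Rightarrow> ereal" where
  "XU_n T n a = (SUP x\<in>Bn T n. ereal (norm (\<Sum>i<n. a i *\<^sub>R x i)))"

definition Phi_n :: "'a::{banach,lattice} itself \<Rightarrow> nat \<Rightarrow> (nat \<Rightarrow> real) \<Rightarrow> real" where
  "Phi_n T n a = (INF x\<in>Bn T n. norm (\<Sum>i<n. a i *\<^sub>R x i))"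

definition XL_n :: "'a::{banach,lattice} itself \<Rightarrow> nat \<Rightarrow> (nat \<Rightarrow> real) \<Rightarrow> real" where
  "XL_n T n a = (INF (m, b)\<in>{(m, b :: nat \<Rightarrow> nat \<Rightarrow> real). \<forall>i<n. a i = (\<Sum>k<m. b k i)}.
                    (\<Sum>k<m. Phi_n T n (b k)))"

definition XU_norm_e :: "'a::{banach,lattice} itself \<Rightarrow> (nat \<Rightarrow> real) \<Rightarrow> ereal" where
  "XU_norm_e T a = (SUP n. XU_n T n a)"

definition XL_norm_e :: "'a::{banach,lattice} itself \<Rightarrow> (nat \<Rightarrow> real) \<Rightarrow> ereal" where
  "XL_norm_e T a = (SUP n. ereal (XL_n T n a))"

definition XU_space :: "'a::{banach,lattice} itself \<Rightarrow> (nat \<Rightarrow> real) set" where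
  "XU_space T = {a. XU_norm_e T a < \<infinity>}"

definition XL_space :: "'a::{banach,lattice} itself \<Rightarrow> (nat \<Rightarrow> real) set" where
  "XL_space T = {a. XL_norm_e T a < \<infinity>}"

definition XU_norm :: "'a::{banach,lattice} itself \<Rightarrow> (nat \<Rightarrow> real) \<Rightarrow> real" where
  "XU_norm T a = real_of_ereal (XU_norm_e T a)"

definition XL_norm :: "'a::{banach,lattice} itself \<Rightarrow> (nat \<Rightarrow> real) \<Rightarrow> real" where
  "XL_norm T a = real_of_ereal (XL_norm_e T a)"

end

theory Submission
  imports Defs "HOL-Library.Lattice_Algebras"
begin

locale BL = fixes T :: "'a::{banach,lattice} itself" assumes bl: "banach_lattice T"
begin

lemma add_mono_r: "(x::'a) \<le> y \<Longrightarrow> x + z \<le> y + z" using bl by (auto simp: banach_lattice_def)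

sublocale L: lattice_ab_group_add_abs lat_abs "(+)" "0::'a" "(-)" uminus "(\<le>)" "(<)" inf sup
  apply unfold_locales
  subgoal for a b c using add_mono_r[of a b c] by (simp add: add.commute)
  by (simp add: lat_abs_def)

lemma scale_mono: "(x::'a) \<le> y \<Longrightarrow> 0 \<le> c \<Longrightarrow> c *\<^sub>R x \<le> c *\<^sub>R y"
  using bl by (auto simp: banach_lattice_def)

lemma norm_mono: "lat_abs (x::'a) \<le> lat_abs y \<Longrightarrow> norm x \<le> norm y"
  using bl by (auto simp: banach_lattice_def)

lemma abs_nonneg[simp]: "0 \<le> lat_abs (x::'a)" by (rule L.abs_ge_zero)

lemma abs_of_nonneg': "0 \<le> (x::'a) \<Longrightarrow> lat_abs x = x" by (rule L.abs_of_nonneg)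

lemma abs_abs[simp]: "lat_abs (lat_abs (x::'a)) = lat_abs x" by (simp add: abs_of_nonneg')

lemma norm_abs[simp]: "norm (lat_abs (x::'a)) = norm x"
  by (intro antisym norm_mono) auto

lemma pos_norm_mono: "0 \<le> (x::'a) \<Longrightarrow> x \<le> y \<Longrightarrow> norm x \<le> norm y"
  using norm_mono[of x y] abs_of_nonneg'[of x] abs_of_nonneg'[of y] by auto

lemma scale_nonneg: "0 \<le> (x::'a) \<Longrightarrow> 0 \<le> c \<Longrightarrow> 0 \<le> c *\<^sub>R x"
  using scale_mono[of 0 x c] by simp

lemma scale_le_scale: "0 \<le> (x::'a) \<Longrightarrow> c \<le> d \<Longrightarrow> c *\<^sub>R x \<le> d *\<^sub>R x"
proof -
  assume "0 \<le> x" "c \<le> d"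
  then have "0 \<le> (d - c) *\<^sub>R x" by (intro scale_nonneg) auto
  then have "0 + c *\<^sub>R x \<le> (d - c) *\<^sub>R x + c *\<^sub>R x" by (rule add_mono_r)
  then show ?thesis by (simp add: algebra_simps)
qed

lemma scale_sup: "0 \<le> c \<Longrightarrow> c *\<^sub>R sup x y = sup (c *\<^sub>R x) (c *\<^sub>R (y::'a))"
proof (cases "c = 0")
  case False
  assume c: "0 \<le> c"
  with False have c': "c > 0" by auto
  show ?thesis
  proof (rule antisym)
    have "x \<le> inverse c *\<^sub>R sup (c *\<^sub>R x) (c *\<^sub>R y)"
      using scale_mono[of "c *\<^sub>R x" "sup (c *\<^sub>R x) (c *\<^sub>R y)" "inverse c"] c' by simp
    moreover have "y \<le> inverse c *\<^sub>R sup (c *\<^sub>R x) (c *\<^sub>R y)"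
      using scale_mono[of "c *\<^sub>R y" "sup (c *\<^sub>R x) (c *\<^sub>R y)" "inverse c"] c' by simp
    ultimately have "sup x y \<le> inverse c *\<^sub>R sup (c *\<^sub>R x) (c *\<^sub>R y)" by simp
    from scale_mono[OF this c] c' show "c *\<^sub>R sup x y \<le> sup (c *\<^sub>R x) (c *\<^sub>R y)" by simp
  next
    show "sup (c *\<^sub>R x) (c *\<^sub>R y) \<le> c *\<^sub>R sup x y"
      using scale_mono[OF _ c] by (simp add: le_supI1 le_supI2)
  qed
qed simp

lemma scale_inf: "0 \<le> c \<Longrightarrow> c *\<^sub>R inf x y = inf (c *\<^sub>R x) (c *\<^sub>R (y::'a))"
proof -
  assume c: "0 \<le> c"
  have "c *\<^sub>R inf x y = c *\<^sub>R (- sup (-x) (-y))" by (subst L.inf_eq_neg_sup) (rule refl)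
  also have "\<dots> = - sup (c *\<^sub>R (-x)) (c *\<^sub>R (-y))" using scale_sup[OF c] by (simp only: scaleR_minus_right)
  also have "\<dots> = inf (c *\<^sub>R x) (c *\<^sub>R y)" by (subst L.inf_eq_neg_sup) simp
  finally show ?thesis .
qed

lemma abs_scale: "lat_abs (c *\<^sub>R (x::'a)) = \<bar>c\<bar> *\<^sub>R lat_abs x"
proof (cases "c \<ge> 0")
  case True
  then show ?thesis using scale_sup[OF True, of x "-x"] unfolding lat_abs_def by simp
next
  case False
  then have "c *\<^sub>R x = - (\<bar>c\<bar> *\<^sub>R x)" by simp
  then have "lat_abs (c *\<^sub>R x) = lat_abs (\<bar>c\<bar> *\<^sub>R x)" by (simp only: L.abs_minus_cancel)
  also have "\<dots> = \<bar>c\<bar> *\<^sub>R lat_abs x" using scale_sup[of "\<bar>c\<bar>" x "-x"] unfolding lat_abs_def by simp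
  finally show ?thesis .
qed


subsection \<open>Disjointness of positive elements\<close>

lemma inf_nonneg: "0 \<le> (a::'a) \<Longrightarrow> 0 \<le> b \<Longrightarrow> 0 \<le> inf a b" by simp

lemma D1: "0 \<le> (a'::'a) \<Longrightarrow> a' \<le> a \<Longrightarrow> 0 \<le> b \<Longrightarrow> inf a b = 0 \<Longrightarrow> inf a' b = 0"
proof -
  assume h: "0 \<le> a'" "a' \<le> a" "0 \<le> b" "inf a b = 0"
  have "inf a' b \<le> inf a b" using h(2) by (rule inf_mono) simp
  then have "inf a' b \<le> 0" using h(4) by simp
  with h show ?thesis by (intro antisym) (simp_all)
qed

lemma D2: "0 \<le> (a::'a) \<Longrightarrow> 0 \<le> b \<Longrightarrow> 0 \<le> c \<Longrightarrow> inf a c = 0 \<Longrightarrow> inf b c = 0 \<Longrightarrow> inf (a + b) c = 0"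
proof -
  assume h: "0 \<le> a" "0 \<le> b" "0 \<le> c" "inf a c = 0" "inf b c = 0"
  have e: "inf a c + inf b c = inf (inf (a + b) (a + c)) (inf (c + b) (c + c))"
    by (simp only: L.add_inf_distrib_right L.add_inf_distrib_left inf_assoc inf_left_commute)
  have c1: "c \<le> a + c" using add_mono_r[of 0 a c] h by simp
  have c2: "c \<le> c + b" using add_mono_r[of 0 b c] h by (simp add: add.commute)
  have c3: "c \<le> c + c" using add_mono_r[of 0 c c] h by simp
  have "inf (a + b) c \<le> inf (inf (a + b) (a + c)) (inf (c + b) (c + c))"
    using c1 c2 c3 by (auto intro: le_infI1 le_infI2 order_trans)
  also have "\<dots> = 0" using e h by simp
  finally show ?thesis using h by (intro antisym) (auto simp: L.add_nonneg_nonneg)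
qed

lemma D3: "0 \<le> (a::'a) \<Longrightarrow> 0 \<le> b \<Longrightarrow> inf a b = 0 \<Longrightarrow> 0 \<le> c \<Longrightarrow> inf (c *\<^sub>R a) b = 0"
proof -
  assume h: "0 \<le> a" "0 \<le> b" "inf a b = 0" "0 \<le> c"
  show ?thesis
  proof (cases "c \<le> 1")
    case True
    have "c *\<^sub>R a \<le> 1 *\<^sub>R a" using scale_le_scale[OF h(1) True] .
    then show ?thesis using D1[of "c *\<^sub>R a" a b] h scale_nonneg by simp
  next
    case False
    have "b \<le> c *\<^sub>R b" using scale_le_scale[OF h(2), of 1 c] False by simp
    then have "inf (c *\<^sub>R a) b \<le> inf (c *\<^sub>R a) (c *\<^sub>R b)" by (auto intro: le_infI2)
    also have "\<dots> = c *\<^sub>R inf a b" using scale_inf[OF h(4)] by simp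
    finally have "inf (c *\<^sub>R a) b \<le> 0" using h by simp
    then show ?thesis using h scale_nonneg by (intro antisym) auto
  qed
qed

lemma D3b: "0 \<le> (a::'a) \<Longrightarrow> 0 \<le> b \<Longrightarrow> inf a b = 0 \<Longrightarrow> 0 \<le> c \<Longrightarrow> 0 \<le> d \<Longrightarrow> inf (c *\<^sub>R a) (d *\<^sub>R b) = 0"
proof -
  assume h: "0 \<le> a" "0 \<le> b" "inf a b = 0" "0 \<le> c" "0 \<le> d"
  have "inf (c *\<^sub>R a) b = 0" using D3 h by blast
  then have "inf (d *\<^sub>R b) (c *\<^sub>R a) = 0" using D3[of b "c *\<^sub>R a" d] h scale_nonneg by (simp add: inf_commute)
  then show ?thesis by (simp add: inf_commute)
qed

lemma sum_nonneg': "(\<And>i. i \<in> A \<Longrightarrow> 0 \<le> f i) \<Longrightarrow> 0 \<le> (sum f A::'a)"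
proof (induction A rule: infinite_finite_induct)
  case (insert x F)
  then show ?case by (simp add: L.add_nonneg_nonneg)
qed simp_all

lemma sum_mono': "(\<And>i. i \<in> A \<Longrightarrow> f i \<le> g i) \<Longrightarrow> (sum f A::'a) \<le> sum g A"
proof (induction A rule: infinite_finite_induct)
  case (insert x F)
  then show ?case by (simp add: L.add_mono)
qed simp_all

lemma D4: "finite A \<Longrightarrow> (\<And>i. i \<in> A \<Longrightarrow> 0 \<le> f i) \<Longrightarrow> (\<And>i. i \<in> A \<Longrightarrow> inf (f i) c = 0) \<Longrightarrow> 0 \<le> (c::'a)
   \<Longrightarrow> inf (sum f A) c = 0"
proof (induction A rule: finite_induct)
  case empty
  then show ?case by (simp add: inf_absorb1)
next
  case (insert x F)
  have "0 \<le> sum f F" using insert by (intro sum_nonneg') auto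
  then show ?case using insert D2[of "f x" "sum f F" c] by auto
qed

lemma D4': "finite A \<Longrightarrow> (\<And>i. i \<in> A \<Longrightarrow> 0 \<le> f i) \<Longrightarrow> (\<And>i. i \<in> A \<Longrightarrow> inf c (f i) = 0) \<Longrightarrow> 0 \<le> (c::'a)
   \<Longrightarrow> inf c (sum f A) = 0"
  using D4[of A f c] by (simp add: inf_commute)


lemma abs_diff_disj: "0 \<le> (u::'a) \<Longrightarrow> 0 \<le> v \<Longrightarrow> inf u v = 0 \<Longrightarrow> lat_abs (u - v) = sup u v"
proof -
  assume h: "0 \<le> u" "0 \<le> v" "inf u v = 0"
  have w: "u + v = sup u v" using L.add_eq_inf_sup[of u v] h by simp
  have "lat_abs (u - v) = sup (u - v) (v - u)" unfolding lat_abs_def by simp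
  also have "\<dots> = sup ((u + u) + - (u + v)) ((v + v) + - (u + v))" by (simp add: algebra_simps)
  also have "\<dots> = sup (u + u) (v + v) + - (u + v)" by (simp only: L.add_sup_distrib_right)
  also have "sup (u + u) (v + v) = sup u v + sup u v" using scale_sup[of 2 u v] by (simp add: scaleR_2)
  also have "sup u v + sup u v + - (u + v) = sup u v" by (simp only: w diff_conv_add_uminus[symmetric] add_diff_cancel_right')
  finally show ?thesis .
qed

lemma E1: "ldisj a b \<Longrightarrow> lat_abs (a + b) = lat_abs a + lat_abs (b::'a)"
proof -
  assume d: "ldisj a b"
  define u where "u = lat_abs a"
  define v where "v = lat_abs b"
  have h: "0 \<le> u" "0 \<le> v" "inf u v = 0" using d by (auto simp: u_def v_def ldisj_def)
  have w: "u + v = sup u v" using L.add_eq_inf_sup[of u v] h by simp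
  have t1: "u \<le> lat_abs (a + b) + v"
    using L.abs_triangle_ineq[of "a + b" "- b"] by (simp add: u_def v_def)
  have t2: "v \<le> lat_abs (a + b) + u"
    using L.abs_triangle_ineq[of "a + b" "- a"] by (simp add: u_def v_def add.commute)
  have "u - v \<le> lat_abs (a + b)" using t1 by (simp add: L.diff_le_eq)
  moreover have "- (u - v) \<le> lat_abs (a + b)" using t2 by (simp add: L.diff_le_eq)
  ultimately have "lat_abs (u - v) \<le> lat_abs (a + b)" by (rule L.abs_leI)
  then have "u + v \<le> lat_abs (a + b)" using abs_diff_disj[OF h] w by simp
  moreover have "lat_abs (a + b) \<le> u + v" unfolding u_def v_def by (rule L.abs_triangle_ineq)
  ultimately show ?thesis unfolding u_def v_def by (rule antisym[rotated])
qed

lemma E2: "finite A \<Longrightarrow> (\<And>i j. i \<in> A \<Longrightarrow> j \<in> A \<Longrightarrow> i \<noteq> j \<Longrightarrow> ldisj (f i) (f j))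
  \<Longrightarrow> lat_abs (sum f A :: 'a) = (\<Sum>i\<in>A. lat_abs (f i))"
proof (induction A rule: finite_induct)
  case empty
  then show ?case by (simp add: lat_abs_def)
next
  case (insert x F)
  have IH: "lat_abs (sum f F) = (\<Sum>i\<in>F. lat_abs (f i))" using insert by auto
  have "inf (lat_abs (f x)) (\<Sum>i\<in>F. lat_abs (f i)) = 0"
  proof (rule D4')
    show "\<And>i. i \<in> F \<Longrightarrow> inf (lat_abs (f x)) (lat_abs (f i)) = 0"
      using insert.prems insert.hyps by (metis insertCI ldisj_def)
  qed (use insert in auto)
  then have "ldisj (f x) (sum f F)" unfolding ldisj_def IH .
  then show ?case using insert IH E1 by simp
qed

lemma ldisj_sym: "ldisj x y \<Longrightarrow> ldisj y (x::'a)" by (simp add: ldisj_def inf_commute)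

lemma ldisj_scale: "ldisj x y \<Longrightarrow> ldisj (c *\<^sub>R x) (d *\<^sub>R (y::'a))"
  unfolding ldisj_def abs_scale by (rule D3b) auto

lemma abs_sum_disj: "pw_disj n x \<Longrightarrow> lat_abs (\<Sum>i<n. c i *\<^sub>R (x i::'a)) = (\<Sum>i<n. \<bar>c i\<bar> *\<^sub>R lat_abs (x i))"
proof -
  assume p: "pw_disj n x"
  have "lat_abs (\<Sum>i<n. c i *\<^sub>R x i) = (\<Sum>i<n. lat_abs (c i *\<^sub>R x i))"
    by (rule E2) (use p in \<open>auto simp: pw_disj_def intro: ldisj_scale\<close>)
  then show ?thesis by (simp add: abs_scale)
qed

lemma R1: "pw_disj n x \<Longrightarrow> (\<And>i. i < n \<Longrightarrow> c i = 0 \<or> d i = 0)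
   \<Longrightarrow> ldisj (\<Sum>i<n. c i *\<^sub>R (x i::'a)) (\<Sum>i<n. d i *\<^sub>R x i)"
proof -
  assume p: "pw_disj n x" and cd: "\<And>i. i < n \<Longrightarrow> c i = 0 \<or> d i = 0"
  have "inf (\<Sum>i<n. \<bar>c i\<bar> *\<^sub>R lat_abs (x i)) (\<Sum>j<n. \<bar>d j\<bar> *\<^sub>R lat_abs (x j)) = 0"
  proof (rule D4)
    fix i assume i: "i \<in> {..<n}"
    show "inf (\<bar>c i\<bar> *\<^sub>R lat_abs (x i)) (\<Sum>j<n. \<bar>d j\<bar> *\<^sub>R lat_abs (x j)) = 0"
    proof (rule D4')
      fix j assume j: "j \<in> {..<n}"
      show "inf (\<bar>c i\<bar> *\<^sub>R lat_abs (x i)) (\<bar>d j\<bar> *\<^sub>R lat_abs (x j)) = 0"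
      proof (cases "i = j")
        case True
        then show ?thesis using cd[of i] i by (auto simp: inf_absorb1 inf_absorb2 scale_nonneg)
      next
        case False
        then show ?thesis using p i j by (intro D3b) (auto simp: pw_disj_def ldisj_def)
      qed
    qed (auto intro!: scale_nonneg sum_nonneg')
  qed (auto intro!: scale_nonneg sum_nonneg')
  then show ?thesis unfolding ldisj_def using abs_sum_disj[OF p] by simp
qed

lemma M1: "pw_disj n x \<Longrightarrow> (\<And>i. i < n \<Longrightarrow> \<bar>c i\<bar> \<le> \<bar>d i\<bar>)
   \<Longrightarrow> norm (\<Sum>i<n. c i *\<^sub>R (x i::'a)) \<le> norm (\<Sum>i<n. d i *\<^sub>R x i)"
proof -
  assume p: "pw_disj n x" and cd: "\<And>i. i < n \<Longrightarrow> \<bar>c i\<bar> \<le> \<bar>d i\<bar>"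
  show ?thesis
  proof (rule norm_mono)
    show "lat_abs (\<Sum>i<n. c i *\<^sub>R x i) \<le> lat_abs (\<Sum>i<n. d i *\<^sub>R x i)"
      unfolding abs_sum_disj[OF p] by (rule sum_mono') (auto intro: scale_le_scale cd)
  qed
qed


subsection \<open>Closed cone\<close>

lemma sup_lip: "lat_abs (sup a c - sup b c) \<le> lat_abs (a - (b::'a))"
proof -
  have g: "sup x c - sup y c \<le> lat_abs (x - y)" for x y :: 'a
  proof -
    have "x \<le> y + lat_abs (x - y)" by (metis L.abs_ge_self L.diff_le_eq add.commute)
    moreover have "c \<le> c + lat_abs (x - y)" using add_mono_r[of 0 "lat_abs (x - y)" c] by (simp add: add.commute)
    ultimately have "sup x c \<le> sup (y + lat_abs (x - y)) (c + lat_abs (x - y))" by (auto intro: le_supI1 le_supI2)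
    also have "\<dots> = sup y c + lat_abs (x - y)" by (simp only: L.add_sup_distrib_right)
    finally show ?thesis by (metis L.diff_le_eq add.commute)
  qed
  have "sup a c - sup b c \<le> lat_abs (a - b)" by (rule g)
  moreover have "- (sup a c - sup b c) \<le> lat_abs (a - b)"
    using g[of b a] L.abs_minus_commute[of b a] by (metis minus_diff_eq)
  ultimately show ?thesis by (rule L.abs_leI)
qed

definition negp :: "'a \<Rightarrow> 'a" where "negp x = sup (- x) 0"

lemma negp_cont: "continuous_on S negp"
proof -
  have "norm (negp x - negp y) \<le> norm (x - y)" for x y
  proof -
    have "norm (negp x - negp y) \<le> norm ((- x) - (- y))"
      unfolding negp_def by (rule norm_mono) (rule order_trans[OF sup_lip], simp)
    then show ?thesis by (simp add: norm_minus_commute)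
  qed
  then show ?thesis unfolding continuous_on_iff dist_norm
    by (meson le_less_trans)
qed

lemma nonneg_iff_negp: "0 \<le> (x::'a) \<longleftrightarrow> negp x = 0"
proof -
  have "0 \<le> x \<longleftrightarrow> - x \<le> 0" by (rule L.neg_le_0_iff_le[symmetric])
  also have "\<dots> \<longleftrightarrow> sup (- x) 0 = 0" by (rule sup.absorb_iff2)
  finally show ?thesis unfolding negp_def .
qed

lemma closed_cone_line: "closed {c::real. c *\<^sub>R u \<le> (x::'a)}"
proof -
  have "\<And>c. (c *\<^sub>R u \<le> x) = (negp (x - c *\<^sub>R u) = 0)"
    by (simp only: nonneg_iff_negp[symmetric] L.diff_ge_0_iff_ge)
  then have "{c::real. c *\<^sub>R u \<le> x} = {c. negp (x - c *\<^sub>R u) = 0}" by blast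
  moreover have "closed {c::real. negp (x - c *\<^sub>R u) = 0}"
    by (intro closed_Collect_eq continuous_on_compose2[OF negp_cont] continuous_intros) auto
  ultimately show ?thesis by simp
qed

lemma closed_cone_line': "closed {c::real. (x::'a) \<le> c *\<^sub>R u}"
proof -
  have "\<And>c. (x \<le> c *\<^sub>R u) = (negp (c *\<^sub>R u - x) = 0)"
    by (simp only: nonneg_iff_negp[symmetric] L.diff_ge_0_iff_ge)
  then have "{c::real. x \<le> c *\<^sub>R u} = {c. negp (c *\<^sub>R u - x) = 0}" by blast
  moreover have "closed {c::real. negp (c *\<^sub>R u - x) = 0}"
    by (intro closed_Collect_eq continuous_on_compose2[OF negp_cont] continuous_intros) auto
  ultimately show ?thesis by simp
qed

lemma norm_scale_le: "0 \<le> (u::'a) \<Longrightarrow> 0 \<le> c \<Longrightarrow> c *\<^sub>R u \<le> z \<Longrightarrow> c * norm u \<le> norm z"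
  using pos_norm_mono[of "c *\<^sub>R u" z] scale_nonneg by simp

lemma pos_neg_disj: "inf (sup x 0) (sup (- x) 0) = (0::'a)"
proof -
  define P where "P = sup x 0"
  have a: "sup (- x) 0 = P + - x" unfolding P_def by (simp only: L.add_sup_distrib_right) (simp add: sup_commute)
  have "inf P (P + - x) = P + inf 0 (- x)" by (simp only: L.add_inf_distrib_left) simp
  also have "inf 0 (- x) = - sup 0 x" by (subst L.inf_eq_neg_sup) (simp only: minus_zero minus_minus)
  also have "P + - sup 0 x = 0" unfolding P_def by (simp only: sup_commute[of x 0] right_minus)
  finally show ?thesis using a P_def by simp
qed

lemma split_pos: "(x::'a) = sup x 0 - sup (- x) 0"
proof -
  have "x = L.pprt x + L.nprt x" by (rule L.prts)
  moreover have "L.nprt x = - sup (- x) 0" unfolding L.nprt_def by (subst L.inf_eq_neg_sup) (simp only: minus_zero minus_minus)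
  ultimately show ?thesis unfolding L.pprt_def by simp
qed


subsection \<open>Infinite dimensional lattices have large disjoint families\<close>

definition dfam :: "nat \<Rightarrow> (nat \<Rightarrow> 'a) \<Rightarrow> bool" where
  "dfam n u \<longleftrightarrow> (\<forall>i<n. 0 \<le> u i \<and> u i \<noteq> 0) \<and> (\<forall>i<n. \<forall>j<n. i \<noteq> j \<longrightarrow> inf (u i) (u j) = 0)"

lemma dfam_mono: "dfam n u \<Longrightarrow> m \<le> n \<Longrightarrow> dfam m u"
  unfolding dfam_def by auto

lemma sup0_eq0: "sup (y::'a) 0 = 0 \<Longrightarrow> y \<le> 0"
  by (metis sup.absorb_iff2)

lemma atom_split:
  assumes fam: "dfam N u" and nomore: "\<not> (\<exists>w. dfam (Suc N) w)" and i: "i < N"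
    and v: "0 \<le> v" "v \<le> u i"
  shows "\<exists>c. v = c *\<^sub>R u i"
proof (rule ccontr)
  assume nc: "\<not> (\<exists>c. v = c *\<^sub>R u i)"
  define ui where "ui = u i"
  have ui: "0 \<le> ui" "ui \<noteq> 0" using fam i by (auto simp: dfam_def ui_def)
  have disj_ui: "\<And>k. k < N \<Longrightarrow> k \<noteq> i \<Longrightarrow> inf ui (u k) = 0" using fam i by (auto simp: dfam_def ui_def)
  have cover: "v \<le> t *\<^sub>R ui \<or> t *\<^sub>R ui \<le> v" if t: "0 \<le> t" "t \<le> 1" for t
  proof (rule ccontr)
    assume "\<not> (v \<le> t *\<^sub>R ui \<or> t *\<^sub>R ui \<le> v)"
    then have n1: "\<not> v \<le> t *\<^sub>R ui" and n2: "\<not> t *\<^sub>R ui \<le> v" by auto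
    define p where "p = sup (v - t *\<^sub>R ui) 0"
    define q where "q = sup (- (v - t *\<^sub>R ui)) 0"
    have p0: "p \<noteq> 0" using n1 sup0_eq0[of "v - t *\<^sub>R ui"] unfolding p_def by (auto simp: L.diff_le_0_iff_le)
    have q0: "q \<noteq> 0" using n2 sup0_eq0[of "- (v - t *\<^sub>R ui)"] unfolding q_def by (auto simp: L.diff_le_0_iff_le)
    have pq: "inf p q = 0" unfolding p_def q_def by (rule pos_neg_disj)
    have tu: "0 \<le> t *\<^sub>R ui" using scale_nonneg[OF ui(1) t(1)] .
    have tu1: "t *\<^sub>R ui \<le> ui" using scale_le_scale[OF ui(1) t(2)] by simp
    have pu: "p \<le> ui"
    proof -
      have "v - t *\<^sub>R ui \<le> v" using tu by (simp add: L.diff_le_eq L.add_increasing2)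
      then have "v - t *\<^sub>R ui \<le> ui" using v(2) ui_def by auto
      then show ?thesis unfolding p_def using ui(1) by simp
    qed
    have qu: "q \<le> ui"
    proof -
      have "- (v - t *\<^sub>R ui) = t *\<^sub>R ui - v" by simp
      moreover have "t *\<^sub>R ui - v \<le> t *\<^sub>R ui" using v(1) by (simp add: L.diff_le_eq L.add_increasing2)
      ultimately have "- (v - t *\<^sub>R ui) \<le> ui" using tu1 by auto
      then show ?thesis unfolding q_def using ui(1) by simp
    qed
    have pp: "0 \<le> p" "0 \<le> q" unfolding p_def q_def by auto
    define w where "w = (\<lambda>j. if j = i then p else if j = N then q else u j)"
    have "dfam (Suc N) w"
      unfolding dfam_def
    proof (intro conjI allI impI)
      fix j assume "j < Suc N"
      then show "0 \<le> w j" "w j \<noteq> 0" using fam pp p0 q0 i by (auto simp: w_def dfam_def)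
    next
      fix j k assume j: "j < Suc N" and k: "k < Suc N" and jk: "j \<noteq> k"
      have pd: "inf p (u l) = 0" if "l < N" "l \<noteq> i" for l
        using D1[OF pp(1) pu _ disj_ui[OF that]] fam that by (auto simp: dfam_def)
      have qd: "inf q (u l) = 0" if "l < N" "l \<noteq> i" for l
        using D1[OF pp(2) qu _ disj_ui[OF that]] fam that by (auto simp: dfam_def)
      show "inf (w j) (w k) = 0"
        using j k jk i fam pd qd pq by (auto simp: w_def dfam_def inf_commute less_Suc_eq)
    qed
    then show False using nomore by blast
  qed
  define T1 where "T1 = {0..1} \<inter> {t. v \<le> t *\<^sub>R ui}"
  define T2 where "T2 = {0..1} \<inter> {t. t *\<^sub>R ui \<le> v}"
  have cl: "closed T1" "closed T2" unfolding T1_def T2_def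
    by (intro closed_Int closed_real_atLeastAtMost closed_cone_line closed_cone_line')+
  have ne: "1 \<in> T1" "0 \<in> T2" using v ui_def by (auto simp: T1_def T2_def)
  have bd: "bdd_below T1" "bdd_above T2" unfolding T1_def T2_def bdd_below_def bdd_above_def by auto
  define r where "r = Inf T1"
  define s where "s = Sup T2"
  have r: "r \<in> T1" unfolding r_def using closed_contains_Inf[of T1] cl bd ne by auto
  have s: "s \<in> T2" unfolding s_def using closed_contains_Sup[of T2] cl bd ne by auto
  show False
  proof (cases "r \<le> s")
    case True
    have "v \<le> r *\<^sub>R ui" using r T1_def by auto
    also have "\<dots> \<le> s *\<^sub>R ui" using scale_le_scale[OF ui(1) True] .
    also have "\<dots> \<le> v" using s T2_def by auto
    finally have "v = s *\<^sub>R ui" using s T2_def by (auto intro: antisym)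
    then show False using nc ui_def by auto
  next
    case False
    define t where "t = (s + r) / 2"
    have t: "0 \<le> t" "t \<le> 1" using r s T1_def T2_def by (auto simp: t_def)
    have "s < t" "t < r" using False by (auto simp: t_def)
    moreover have "t \<in> T1 \<or> t \<in> T2" using cover[OF t] t by (auto simp: T1_def T2_def)
    moreover have "t \<in> T1 \<Longrightarrow> r \<le> t" unfolding r_def using bd(1) by (auto intro: cInf_lower)
    moreover have "t \<in> T2 \<Longrightarrow> t \<le> s" unfolding s_def using bd(2) by (auto intro: cSup_upper)
    ultimately show False by auto
  qed
qed


lemma decomp:
  assumes fam: "dfam N u" and nomore: "\<not> (\<exists>w. dfam (Suc N) w)" and x: "0 \<le> x"
  shows "m \<le> N \<Longrightarrow> \<exists>z. 0 \<le> z \<and> z \<le> x \<and> x - z \<in> span (u ` {..<m}) \<and> (\<forall>i<m. inf z (u i) = 0)"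
proof (induction m)
  case 0
  then show ?case using x by (intro exI[of _ x]) (auto simp: span_zero)
next
  case (Suc m)
  then obtain z where z: "0 \<le> z" "z \<le> x" "x - z \<in> span (u ` {..<m})" "\<forall>i<m. inf z (u i) = 0" by auto
  have mN: "m < N" using Suc by auto
  define ui where "ui = u m"
  have ui: "0 \<le> ui" "ui \<noteq> 0" using fam mN by (auto simp: dfam_def ui_def)
  have nui: "norm ui > 0" using ui by simp
  define S where "S = {0..} \<inter> {c::real. c *\<^sub>R ui \<le> z}"
  have S0: "0 \<in> S" using z by (auto simp: S_def)
  have Sbd: "bdd_above S" unfolding bdd_above_def
  proof (intro exI ballI)
    fix c assume "c \<in> S"
    then have "c * norm ui \<le> norm z" using norm_scale_le[OF ui(1)] by (auto simp: S_def)
    then show "c \<le> norm z / norm ui" using nui by (simp add: field_simps)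
  qed
  have Scl: "closed S" unfolding S_def by (intro closed_Int closed_atLeast closed_cone_line)
  define c0 where "c0 = Sup S"
  have c0: "c0 \<in> S" unfolding c0_def using closed_contains_Sup[OF _ Sbd Scl] S0 by auto
  have c0p: "0 \<le> c0" "c0 *\<^sub>R ui \<le> z" using c0 by (auto simp: S_def)
  have cu0: "0 \<le> c0 *\<^sub>R ui" by (rule scale_nonneg[OF ui(1) c0p(1)])
  define z' where "z' = z - c0 *\<^sub>R ui"
  have z'0: "0 \<le> z'" unfolding z'_def using c0p(2) by (simp add: L.diff_ge_0_iff_ge)
  have z'z: "z' \<le> z" unfolding z'_def using cu0 by (simp add: L.diff_le_eq L.add_increasing2)
  have "x - z' = (x - z) + c0 *\<^sub>R ui" by (simp add: z'_def)
  moreover have "x - z \<in> span (u ` {..<Suc m})" proof -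
    have "u ` {..<m} \<subseteq> u ` {..<Suc m}" by auto
    then show ?thesis using z(3) span_mono by blast
  qed
  moreover have "c0 *\<^sub>R ui \<in> span (u ` {..<Suc m})" unfolding ui_def by (intro span_mul span_base) auto
  ultimately have sp: "x - z' \<in> span (u ` {..<Suc m})" by (metis span_add)
  have dm: "inf z' ui = 0"
  proof -
    define w where "w = inf z' ui"
    have w: "0 \<le> w" "w \<le> ui" "w \<le> z'" using z'0 ui by (auto simp: w_def)
    obtain d where d: "w = d *\<^sub>R ui" using atom_split[OF fam nomore mN w(1)] w(2) ui_def by auto
    have "d \<le> 0"
    proof (rule ccontr)
      assume "\<not> d \<le> 0"
      then have dp: "0 \<le> d" by simp
      have "(c0 + d) *\<^sub>R ui = c0 *\<^sub>R ui + w" by (simp add: d scaleR_add_left)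
      also have "\<dots> \<le> c0 *\<^sub>R ui + z'" using w(3) by (simp add: L.add_left_mono)
      also have "\<dots> = z" by (simp add: z'_def)
      finally have "c0 + d \<in> S" using c0p dp by (auto simp: S_def)
      then have "c0 + d \<le> c0" unfolding c0_def using Sbd by (rule cSup_upper)
      then show False using \<open>\<not> d \<le> 0\<close> by simp
    qed
    then have "w \<le> 0" using scale_le_scale[OF ui(1), of d 0] d by simp
    then show ?thesis using w(1) w_def by (auto intro: antisym)
  qed
  have "\<forall>i<Suc m. inf z' (u i) = 0"
  proof (intro allI impI)
    fix i assume "i < Suc m"
    then consider "i < m" | "i = m" by linarith
    then show "inf z' (u i) = 0"
    proof cases
      case 1
      then show ?thesis using D1[OF z'0 z'z _ ] z(4) fam mN by (auto simp: dfam_def)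
    next
      case 2
      then show ?thesis using dm ui_def by simp
    qed
  qed
  then show ?case using z'0 z'z z(2) sp by (intro exI[of _ z']) auto
qed

lemma ID_fam:
  assumes inf: "infinite_dimensional T"
  shows "\<exists>u. dfam n u"
proof (rule ccontr)
  assume no: "\<not> (\<exists>u. dfam n u)"
  have bound: "m < n" if "dfam m u" for m u
    using that no dfam_mono[of m u n] by (meson not_less)
  define P where "P = (\<lambda>m. \<exists>u. dfam m u)"
  have P0: "P 0" by (simp add: P_def dfam_def)
  define N where "N = (GREATEST m. P m)"
  have PN: "P N" unfolding N_def using P0 bound by (intro GreatestI_nat[of P 0 n]) (auto simp: P_def less_imp_le)
  have nomore: "\<not> (\<exists>w. dfam (Suc N) w)"
  proof
    assume "\<exists>w. dfam (Suc N) w"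
    then have "Suc N \<le> N" unfolding N_def using bound by (intro Greatest_le_nat[of P _ n]) (auto simp: P_def less_imp_le)
    then show False by simp
  qed
  obtain u where fam: "dfam N u" using PN P_def by auto
  have pos: "x \<in> span (u ` {..<N})" if x: "0 \<le> x" for x
  proof -
    obtain z where z: "0 \<le> z" "z \<le> x" "x - z \<in> span (u ` {..<N})" "\<forall>i<N. inf z (u i) = 0"
      using decomp[OF fam nomore x, of N] by auto
    have "z = 0"
    proof (rule ccontr)
      assume "z \<noteq> 0"
      then have "dfam (Suc N) (u(N := z))" using fam z
        by (auto simp: dfam_def less_Suc_eq inf_commute)
      then show False using nomore by blast
    qed
    then show ?thesis using z by simp
  qed
  have "span (u ` {..<N}) = UNIV"
  proof (intro set_eqI iffI)
    fix x :: 'a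
    have "sup x 0 \<in> span (u ` {..<N})" "sup (- x) 0 \<in> span (u ` {..<N})" by (auto intro: pos)
    then have "sup x 0 - sup (- x) 0 \<in> span (u ` {..<N})" by (rule span_diff)
    then show "x \<in> span (u ` {..<N})" using split_pos[of x] by simp
  qed auto
  then show False using inf unfolding infinite_dimensional_def by blast
qed

lemma dfam_Bn: "dfam n u \<Longrightarrow> (\<lambda>i. (1 / norm (u i)) *\<^sub>R u i) \<in> Bn T n"
  unfolding Bn_def pw_disj_def
proof (intro CollectI conjI allI impI)
  assume f: "dfam n u"
  fix i assume "i < n"
  then show "norm ((1 / norm (u i)) *\<^sub>R u i) = 1" using f by (auto simp: dfam_def)
next
  assume f: "dfam n u"
  fix i j assume "i < n" "j < n" "i \<noteq> j"
  then have "ldisj (u i) (u j)" using f by (auto simp: dfam_def ldisj_def abs_of_nonneg')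
  then show "ldisj ((1 / norm (u i)) *\<^sub>R u i) ((1 / norm (u j)) *\<^sub>R u j)" by (rule ldisj_scale)
qed

lemma Bn_ne: "infinite_dimensional T \<Longrightarrow> Bn T n \<noteq> {}"
  using ID_fam dfam_Bn by blast


lemma le_sum_nonneg: "finite A \<Longrightarrow> a \<in> A \<Longrightarrow> (\<And>i. i \<in> A \<Longrightarrow> 0 \<le> f i) \<Longrightarrow> f a \<le> (sum f A :: 'a)"
proof -
  assume h: "finite A" "a \<in> A" "\<And>i. i \<in> A \<Longrightarrow> 0 \<le> f i"
  have "sum f A = f a + sum f (A - {a})" using h by (simp add: sum.remove)
  moreover have "0 \<le> sum f (A - {a})" using h by (intro sum_nonneg') auto
  ultimately show ?thesis by (simp add: L.add_increasing2)
qed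

lemma not_le_small: "0 \<le> (w::'a) \<Longrightarrow> w \<noteq> 0 \<Longrightarrow> \<exists>d>0. \<not> w \<le> d *\<^sub>R y"
proof (rule ccontr)
  assume h: "0 \<le> w" "w \<noteq> 0" "\<not> (\<exists>d>0. \<not> w \<le> d *\<^sub>R y)"
  then have "{0<..} \<subseteq> {d::real. w \<le> d *\<^sub>R y}" by auto
  then have "closure {0<..} \<subseteq> {d::real. w \<le> d *\<^sub>R y}"
    using closed_cone_line' by (rule closure_minimal)
  then have "w \<le> 0 *\<^sub>R y" by auto
  then show False using h by (auto intro: antisym)
qed

lemma DJ:
  assumes "0 < \<delta>" "0 \<le> w" "w \<le> s"
  shows "inf (sup (y - (1 / \<delta>) *\<^sub>R s) 0) (sup (w - \<delta> *\<^sub>R y) 0) = (0::'a)"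
proof -
  define f where "f = y - (1 / \<delta>) *\<^sub>R s"
  have "\<delta> *\<^sub>R f + (w - \<delta> *\<^sub>R y) = w - s" using assms(1) by (simp add: f_def algebra_simps)
  also have "\<dots> \<le> 0" using assms by (simp add: L.diff_le_0_iff_le)
  finally have h0: "\<delta> *\<^sub>R f + (w - \<delta> *\<^sub>R y) \<le> 0" .
  have "w - \<delta> *\<^sub>R y = (\<delta> *\<^sub>R f + (w - \<delta> *\<^sub>R y)) + - (\<delta> *\<^sub>R f)" by simp
  also have "\<dots> \<le> 0 + - (\<delta> *\<^sub>R f)" using add_mono_r[OF h0] .
  finally have "w - \<delta> *\<^sub>R y \<le> \<delta> *\<^sub>R (- f)" by simp
  then have "sup (w - \<delta> *\<^sub>R y) 0 \<le> sup (\<delta> *\<^sub>R (- f)) 0" by (auto intro: le_supI1)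
  also have "\<dots> = \<delta> *\<^sub>R sup (- f) 0" using scale_sup[of \<delta> "- f" 0] assms by simp
  finally have le: "sup (w - \<delta> *\<^sub>R y) 0 \<le> \<delta> *\<^sub>R sup (- f) 0" .
  have "inf (sup f 0) (\<delta> *\<^sub>R sup (- f) 0) = 0"
    using D3[of "sup (- f) 0" "sup f 0" \<delta>] pos_neg_disj[of f] assms by (simp add: inf_commute)
  then have "inf (sup f 0) (sup (w - \<delta> *\<^sub>R y) 0) \<le> 0"
    using inf_mono[OF order_refl le] by metis
  then show ?thesis unfolding f_def by (intro antisym) auto
qed

lemma G0:
  assumes y: "0 \<le> y" and s: "0 \<le> s" and d: "0 < \<delta>"
    and v: "\<And>j. j < M \<Longrightarrow> 0 \<le> v j \<and> v j \<le> s \<and> \<not> v j \<le> \<delta> *\<^sub>R y"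
    and vd: "\<And>i j. i < M \<Longrightarrow> j < M \<Longrightarrow> i \<noteq> j \<Longrightarrow> inf (v i) (v j) = 0"
  shows "0 \<le> sup (y - (1 / \<delta>) *\<^sub>R s) 0 \<and> sup (y - (1 / \<delta>) *\<^sub>R s) 0 \<le> y
     \<and> dfam M (\<lambda>j. sup (v j - \<delta> *\<^sub>R y) (0::'a))
     \<and> (\<forall>j<M. inf (sup (y - (1 / \<delta>) *\<^sub>R s) 0) (sup (v j - \<delta> *\<^sub>R y) 0) = 0)
     \<and> (\<forall>j<M. sup (v j - \<delta> *\<^sub>R y) 0 \<le> v j)"
proof -
  have dy: "0 \<le> \<delta> *\<^sub>R y" using scale_nonneg[OF y] d by simp
  have zle: "sup (v j - \<delta> *\<^sub>R y) 0 \<le> v j" if "j < M" for j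
    using v[OF that] dy by (auto simp: L.diff_le_eq L.add_increasing2)
  have xle: "sup (y - (1 / \<delta>) *\<^sub>R s) 0 \<le> y"
    using scale_nonneg[OF s, of "1/\<delta>"] d y by (auto simp: L.diff_le_eq L.add_increasing2)
  have "dfam M (\<lambda>j. sup (v j - \<delta> *\<^sub>R y) 0)"
    unfolding dfam_def
  proof (intro conjI allI impI)
    fix j assume j: "j < M"
    show "0 \<le> sup (v j - \<delta> *\<^sub>R y) 0" by simp
    show "sup (v j - \<delta> *\<^sub>R y) 0 \<noteq> 0" using v[OF j] sup0_eq0[of "v j - \<delta> *\<^sub>R y"]
      by (auto simp: L.diff_le_0_iff_le)
  next
    fix i j assume ij: "i < M" "j < M" "i \<noteq> j"
    have "inf (sup (v i - \<delta> *\<^sub>R y) 0) (v j) = 0"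
      using D1[of "sup (v i - \<delta> *\<^sub>R y) 0" "v i" "v j"] zle[OF ij(1)] vd[OF ij] v ij by auto
    then have "inf (v j) (sup (v i - \<delta> *\<^sub>R y) 0) = 0" by (simp add: inf_commute)
    then have "inf (sup (v j - \<delta> *\<^sub>R y) 0) (sup (v i - \<delta> *\<^sub>R y) 0) = 0"
      using D1[of "sup (v j - \<delta> *\<^sub>R y) 0" "v j" "sup (v i - \<delta> *\<^sub>R y) 0"] zle[OF ij(2)] by auto
    then show "inf (sup (v i - \<delta> *\<^sub>R y) 0) (sup (v j - \<delta> *\<^sub>R y) 0) = 0" by (simp add: inf_commute)
  qed
  moreover have "\<forall>j<M. inf (sup (y - (1 / \<delta>) *\<^sub>R s) 0) (sup (v j - \<delta> *\<^sub>R y) 0) = 0"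
    using DJ[OF d] v by auto
  ultimately show ?thesis using xle zle by auto
qed


lemma G:
  assumes y: "0 \<le> y" and fam: "dfam (2 * M) w"
  shows "\<exists>x z. 0 \<le> x \<and> x \<le> y \<and> norm y \<le> 2 * norm x \<and> dfam M z \<and> (\<forall>j<M. inf x (z j) = (0::'a))
     \<and> (\<forall>j<M. \<exists>l<2 * M. z j \<le> w l)"
proof -
  have "\<forall>l. \<exists>d. l < 2 * M \<longrightarrow> d > 0 \<and> \<not> w l \<le> d *\<^sub>R y"
    using not_le_small fam by (auto simp: dfam_def)
  then obtain df where df: "\<And>l. l < 2 * M \<Longrightarrow> df l > 0 \<and> \<not> w l \<le> df l *\<^sub>R y" by metis
  define \<delta> where "\<delta> = Min (insert 1 (df ` {..<2 * M}))"
  have dpos: "\<delta> > 0" unfolding \<delta>_def using df by (auto simp: Min_gr_iff)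
  have dle: "\<delta> \<le> df l" if "l < 2 * M" for l unfolding \<delta>_def using that by (auto intro: Min_le)
  have nle: "\<not> w l \<le> \<delta> *\<^sub>R y" if l: "l < 2 * M" for l
  proof
    assume "w l \<le> \<delta> *\<^sub>R y"
    also have "\<dots> \<le> df l *\<^sub>R y" using scale_le_scale[OF y dle[OF l]] .
    finally show False using df[OF l] by simp
  qed
  have wp: "0 \<le> w l" if "l < 2 * M" for l using fam that by (auto simp: dfam_def)
  have wd: "inf (w l) (w l') = 0" if "l < 2 * M" "l' < 2 * M" "l \<noteq> l'" for l l'
    using fam that by (auto simp: dfam_def)
  define s1 where "s1 = (\<Sum>l<M. w l)"
  define s2 where "s2 = (\<Sum>l<M. w (M + l))"
  have s1p: "0 \<le> s1" unfolding s1_def by (intro sum_nonneg') (auto intro: wp)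
  have s2p: "0 \<le> s2" unfolding s2_def by (intro sum_nonneg') (auto intro: wp)
  have s12: "inf s1 s2 = 0" unfolding s1_def
  proof (rule D4)
    fix l assume l: "l \<in> {..<M}"
    show "inf (w l) s2 = 0" unfolding s2_def
      by (rule D4') (use l in \<open>auto intro!: wp wd\<close>)
  qed (use s2p in \<open>auto intro: wp\<close>)
  define C where "C = 1 / \<delta>"
  define x1 where "x1 = sup (y - C *\<^sub>R s2) 0"
  define x2 where "x2 = sup (y - C *\<^sub>R s1) 0"
  have "sup (y - C *\<^sub>R s2) (y - C *\<^sub>R s1) = y + sup (- (C *\<^sub>R s2)) (- (C *\<^sub>R s1))"
    by (simp only: diff_conv_add_uminus L.add_sup_distrib_left)
  also have "sup (- (C *\<^sub>R s2)) (- (C *\<^sub>R s1)) = - inf (C *\<^sub>R s2) (C *\<^sub>R s1)"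
    by (simp only: L.neg_inf_eq_sup)
  also have "inf (C *\<^sub>R s2) (C *\<^sub>R s1) = C *\<^sub>R inf s2 s1" using scale_inf[of C s2 s1] dpos C_def by simp
  finally have yeq: "sup (y - C *\<^sub>R s2) (y - C *\<^sub>R s1) = y" using s12 by (simp add: inf_commute)
  have x12: "0 \<le> x1" "0 \<le> x2" unfolding x1_def x2_def by auto
  have "y \<le> x1 + x2"
  proof -
    have "y - C *\<^sub>R s2 \<le> x1 + x2" using x12 unfolding x1_def by (meson L.add_increasing2 sup.cobounded1)
    moreover have "y - C *\<^sub>R s1 \<le> x1 + x2" using x12 unfolding x2_def by (meson L.add_increasing sup.cobounded1)
    ultimately show ?thesis using yeq by (metis sup_least)
  qed
  then have "norm y \<le> norm (x1 + x2)" by (rule pos_norm_mono[OF y])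
  also have "\<dots> \<le> norm x1 + norm x2" by (rule norm_triangle_ineq)
  finally have ny: "norm y \<le> norm x1 + norm x2" .
  show ?thesis
  proof (cases "norm x2 \<le> norm x1")
    case True
    have g: "0 \<le> sup (y - (1 / \<delta>) *\<^sub>R s2) 0 \<and> sup (y - (1 / \<delta>) *\<^sub>R s2) 0 \<le> y
     \<and> dfam M (\<lambda>j. sup (w (M + j) - \<delta> *\<^sub>R y) (0::'a))
     \<and> (\<forall>j<M. inf (sup (y - (1 / \<delta>) *\<^sub>R s2) 0) (sup (w (M + j) - \<delta> *\<^sub>R y) 0) = 0)
     \<and> (\<forall>j<M. sup (w (M + j) - \<delta> *\<^sub>R y) 0 \<le> w (M + j))"
    proof (rule G0[OF y s2p dpos])
      fix j assume j: "j < M"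
      show "0 \<le> w (M + j) \<and> w (M + j) \<le> s2 \<and> \<not> w (M + j) \<le> \<delta> *\<^sub>R y"
        using wp j nle unfolding s2_def by (auto intro!: le_sum_nonneg[where f="\<lambda>l. w (M + l)", of "{..<M}" j, simplified])
    next
      fix i j assume "i < M" "j < M" "i \<noteq> j"
      then show "inf (w (M + i)) (w (M + j)) = 0" by (intro wd) auto
    qed
    show ?thesis
      apply (rule exI[of _ x1], rule exI[of _ "\<lambda>j. sup (w (M + j) - \<delta> *\<^sub>R y) 0"])
      using g True ny unfolding x1_def C_def by (auto intro!: exI[of _ "M + _"])
  next
    case False
    have g: "0 \<le> sup (y - (1 / \<delta>) *\<^sub>R s1) 0 \<and> sup (y - (1 / \<delta>) *\<^sub>R s1) 0 \<le> y
     \<and> dfam M (\<lambda>j. sup (w j - \<delta> *\<^sub>R y) (0::'a))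
     \<and> (\<forall>j<M. inf (sup (y - (1 / \<delta>) *\<^sub>R s1) 0) (sup (w j - \<delta> *\<^sub>R y) 0) = 0)
     \<and> (\<forall>j<M. sup (w j - \<delta> *\<^sub>R y) 0 \<le> w j)"
    proof (rule G0[OF y s1p dpos])
      fix j assume j: "j < M"
      show "0 \<le> w j \<and> w j \<le> s1 \<and> \<not> w j \<le> \<delta> *\<^sub>R y"
        using wp j nle unfolding s1_def by (auto intro!: le_sum_nonneg)
    next
      fix i j assume "i < M" "j < M" "i \<noteq> j"
      then show "inf (w i) (w j) = 0" by (intro wd) auto
    qed
    show ?thesis
      apply (rule exI[of _ x2], rule exI[of _ "\<lambda>j. sup (w j - \<delta> *\<^sub>R y) 0"])
      using g False ny unfolding x2_def C_def by (auto intro!: exI[of _ "_"])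
  qed
qed

lemma room:
  fixes r M :: nat
  assumes inf: "infinite_dimensional T" and yp: "\<And>i. 0 \<le> (y i::'a)"
  shows "\<exists>x z. (\<forall>i<r. 0 \<le> x i \<and> x i \<le> y i \<and> norm (y i) \<le> 2 * norm (x i)) \<and> dfam M z
      \<and> (\<forall>i<r. \<forall>j<M. inf (x i) (z j) = 0)"
proof (induction r arbitrary: M)
  case 0
  then show ?case using ID_fam[OF inf] by auto
next
  case (Suc r)
  obtain x w where xw: "\<forall>i<r. 0 \<le> x i \<and> x i \<le> y i \<and> norm (y i) \<le> 2 * norm (x i)" "dfam (2 * M) w"
    "\<forall>i<r. \<forall>j<2 * M. inf (x i) (w j) = 0" using Suc.IH[of "2 * M"] by (elim exE conjE) blast
  obtain x' z where g: "0 \<le> x'" "x' \<le> y r" "norm (y r) \<le> 2 * norm x'" "dfam M z" "\<forall>j<M. inf x' (z j) = 0"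
     "\<forall>j<M. \<exists>l<2 * M. z j \<le> w l" using G[OF yp[of r] xw(2)] by (elim exE conjE) blast
  have zp: "0 \<le> z j" if "j < M" for j using g(4) that by (auto simp: dfam_def)
  have "\<forall>i<Suc r. \<forall>j<M. inf ((x(r := x')) i) (z j) = 0"
  proof (intro allI impI)
    fix i j assume i: "i < Suc r" and j: "j < M"
    show "inf ((x(r := x')) i) (z j) = 0"
    proof (cases "i = r")
      case True
      then show ?thesis using g(5) j by simp
    next
      case False
      then have ir: "i < r" using i by simp
      obtain l where l: "l < 2 * M" "z j \<le> w l" using g(6) j by blast
      have "inf (w l) (x i) = 0" using xw(3) ir l(1) by (simp add: inf_commute)
      then have "inf (z j) (x i) = 0"
        using D1[of "z j" "w l" "x i"] zp[OF j] l(2) xw(1) ir by blast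
      then show ?thesis using False by (simp add: inf_commute)
    qed
  qed
  moreover have "\<forall>i<Suc r. 0 \<le> (x(r := x')) i \<and> (x(r := x')) i \<le> y i \<and> norm (y i) \<le> 2 * norm ((x(r := x')) i)"
  proof (intro allI impI)
    fix i assume "i < Suc r"
    then consider "i < r" | "i = r" by linarith
    then show "0 \<le> (x(r := x')) i \<and> (x(r := x')) i \<le> y i \<and> norm (y i) \<le> 2 * norm ((x(r := x')) i)"
      by cases (use xw(1) g(1-3) in auto)
  qed
  ultimately show ?case using g(4) by blast
qed


end

section \<open>Minkowski\<close>

lemma convex_powr_nonneg:
  fixes q s s' l :: real
  assumes q: "1 \<le> q" and s: "0 \<le> s" "0 \<le> s'" and l: "0 \<le> l" "l \<le> 1"
  shows "((1 - l) * s + l * s') powr q \<le> (1 - l) * s powr q + l * s' powr q"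
proof -
  have le_self: "c powr q \<le> c" if "0 \<le> c" "c \<le> 1" for c :: real
  proof (cases "c = 0")
    case False then show ?thesis using powr_le_one_le[of c q] that q by auto
  qed simp
  show ?thesis
  proof (cases "s = 0")
    case True
    have "(l * s') powr q = l powr q * s' powr q" using l s by (simp add: powr_mult)
    also have "\<dots> \<le> l * s' powr q" using le_self[OF l] by (intro mult_right_mono) auto
    finally show ?thesis using True q by simp
  next
    case s0: False
    show ?thesis
    proof (cases "s' = 0")
      case True
      have "((1 - l) * s) powr q = (1 - l) powr q * s powr q" using l s by (simp add: powr_mult)
      also have "\<dots> \<le> (1 - l) * s powr q" using le_self[of "1 - l"] l by (intro mult_right_mono) auto
      finally show ?thesis using True q by simp
    next
      case False
      have "convex_on {0<..} (\<lambda>x::real. x powr q)" using powr_convex[OF q] .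
      from convex_onD[OF this, of l s s'] show ?thesis using s s0 False l by (simp add: algebra_simps)
    qed
  qed
qed

lemma pnorm_zero:
  assumes "finite A" "\<And>j. j \<in> A \<Longrightarrow> 0 \<le> (u j::real)" "(\<Sum>j\<in>A. u j powr q) powr (1 / q) = 0"
  shows "\<And>j. j \<in> A \<Longrightarrow> u j = 0"
proof -
  have "(\<Sum>j\<in>A. u j powr q) = 0" using assms(3) by simp
  then have "\<forall>j\<in>A. u j powr q = 0" using assms(1) by (subst sum_nonneg_eq_0_iff[symmetric]) auto
  then show "\<And>j. j \<in> A \<Longrightarrow> u j = 0" by simp
qed

lemma pnorm_pow:
  assumes "finite A" "\<And>j. j \<in> A \<Longrightarrow> 0 \<le> (u j::real)" "0 < q"
  shows "((\<Sum>j\<in>A. u j powr q) powr (1 / q)) powr q = (\<Sum>j\<in>A. u j powr q)"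
  using assms by (simp add: powr_powr sum_nonneg)

lemma mink2:
  fixes u v :: "'b \<Rightarrow> real"
  assumes q: "1 \<le> q" and A: "finite A" and u: "\<And>j. j \<in> A \<Longrightarrow> 0 \<le> u j" and v: "\<And>j. j \<in> A \<Longrightarrow> 0 \<le> v j"
  shows "(\<Sum>j\<in>A. (u j + v j) powr q) powr (1/q) \<le> (\<Sum>j\<in>A. u j powr q) powr (1/q) + (\<Sum>j\<in>A. v j powr q) powr (1/q)"
proof -
  define a where "a = (\<Sum>j\<in>A. u j powr q) powr (1/q)"
  define b where "b = (\<Sum>j\<in>A. v j powr q) powr (1/q)"
  have a0: "0 \<le> a" "0 \<le> b" by (auto simp: a_def b_def)
  show ?thesis
  proof (cases "a = 0 \<or> b = 0")
    case True
    then show ?thesis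
    proof
      assume "a = 0"
      then have "(\<Sum>j\<in>A. u j powr q) powr (1/q) = 0" using a_def by simp
      then have "\<And>j. j \<in> A \<Longrightarrow> u j = 0" using pnorm_zero[OF A, of u q] u by blast
      then show ?thesis by (simp add: a_def b_def)
    next
      assume "b = 0"
      then have "(\<Sum>j\<in>A. v j powr q) powr (1/q) = 0" using b_def by simp
      then have "\<And>j. j \<in> A \<Longrightarrow> v j = 0" using pnorm_zero[OF A, of v q] v by blast
      then show ?thesis by (simp add: a_def b_def)
    qed
  next
    case False
    then have ap: "0 < a" "0 < b" using a0 by auto
    have qp: "0 < q" using q by simp
    define l where "l = b / (a + b)"
    have l: "0 \<le> l" "l \<le> 1" "1 - l = a / (a + b)" using ap by (auto simp: l_def field_simps)
    have ua: "(\<Sum>j\<in>A. (u j / a) powr q) = 1"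
    proof -
      have "(\<Sum>j\<in>A. (u j / a) powr q) = (\<Sum>j\<in>A. u j powr q) / a powr q"
        using u ap by (simp add: powr_divide sum_divide_distrib)
      also have "a powr q = (\<Sum>j\<in>A. u j powr q)" unfolding a_def by (rule pnorm_pow[OF A u qp])
      finally show ?thesis using ap(1) a_def by (auto simp: sum_nonneg)
    qed
    have vb: "(\<Sum>j\<in>A. (v j / b) powr q) = 1"
    proof -
      have "(\<Sum>j\<in>A. (v j / b) powr q) = (\<Sum>j\<in>A. v j powr q) / b powr q"
        using v ap by (simp add: powr_divide sum_divide_distrib)
      also have "b powr q = (\<Sum>j\<in>A. v j powr q)" unfolding b_def by (rule pnorm_pow[OF A v qp])
      finally show ?thesis using ap(2) b_def by (auto simp: sum_nonneg)
    qed
    have "(\<Sum>j\<in>A. ((u j + v j) / (a + b)) powr q) \<le> (\<Sum>j\<in>A. (1 - l) * (u j / a) powr q + l * (v j / b) powr q)"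
    proof (rule sum_mono)
      fix j assume j: "j \<in> A"
      have "(1 - l) * (u j / a) + l * (v j / b) = a / (a + b) * (u j / a) + b / (a + b) * (v j / b)"
        using l(3) by (simp add: l_def)
      also have "\<dots> = u j / (a + b) + v j / (a + b)" using ap by simp
      also have "\<dots> = (u j + v j) / (a + b)" by (simp add: add_divide_distrib)
      finally have "(u j + v j) / (a + b) = (1 - l) * (u j / a) + l * (v j / b)" by simp
      then show "((u j + v j) / (a + b)) powr q \<le> (1 - l) * (u j / a) powr q + l * (v j / b) powr q"
        using convex_powr_nonneg[OF q _ _ l(1,2), of "u j / a" "v j / b"] u[OF j] v[OF j] ap by simp
    qed
    also have "\<dots> = (1 - l) * (\<Sum>j\<in>A. (u j / a) powr q) + l * (\<Sum>j\<in>A. (v j / b) powr q)"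
      by (simp add: sum.distrib sum_distrib_left)
    also have "\<dots> = 1" using ua vb by simp
    finally have le1: "(\<Sum>j\<in>A. ((u j + v j) / (a + b)) powr q) \<le> 1" .
    have "(\<Sum>j\<in>A. (u j + v j) powr q) = (a + b) powr q * (\<Sum>j\<in>A. ((u j + v j) / (a + b)) powr q)"
      using u v ap by (simp add: powr_divide sum_distrib_left)
    also have "\<dots> \<le> (a + b) powr q" using le1 by (simp add: mult_left_le)
    finally have "(\<Sum>j\<in>A. (u j + v j) powr q) \<le> (a + b) powr q" .
    then have "(\<Sum>j\<in>A. (u j + v j) powr q) powr (1/q) \<le> ((a + b) powr q) powr (1/q)"
      using qp by (intro powr_mono2) (auto simp: sum_nonneg)
    also have "\<dots> = a + b" using ap qp by (simp add: powr_powr)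
    finally show ?thesis unfolding a_def b_def .
  qed
qed

lemma minkN:
  fixes c :: "nat \<Rightarrow> 'b \<Rightarrow> real"
  assumes q: "1 \<le> q" and A: "finite A" and c: "\<And>k j. 0 \<le> c k j"
  shows "(\<Sum>j\<in>A. (\<Sum>k<m. c k j) powr q) powr (1/q) \<le> (\<Sum>k<m. (\<Sum>j\<in>A. c k j powr q) powr (1/q))"
proof (induction m)
  case 0
  then show ?case by simp
next
  case (Suc m)
  have "(\<Sum>j\<in>A. (\<Sum>k<Suc m. c k j) powr q) powr (1/q) = (\<Sum>j\<in>A. ((\<Sum>k<m. c k j) + c m j) powr q) powr (1/q)"
    by simp
  also have "\<dots> \<le> (\<Sum>j\<in>A. (\<Sum>k<m. c k j) powr q) powr (1/q) + (\<Sum>j\<in>A. c m j powr q) powr (1/q)"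
    by (rule mink2[OF q A]) (auto intro: sum_nonneg c)
  also have "\<dots> \<le> (\<Sum>k<m. (\<Sum>j\<in>A. c k j powr q) powr (1/q)) + (\<Sum>j\<in>A. c m j powr q) powr (1/q)"
    using Suc.IH by simp
  finally show ?case by simp
qed


lemma sum_fun_apply: "(sum f A) (l::'b) = (\<Sum>j\<in>A. f j l)" for f :: "'c \<Rightarrow> 'b \<Rightarrow> real"
  by (induction A rule: infinite_finite_induct) auto

lemma fun_lat_abs: "lat_abs (a::nat \<Rightarrow> real) = (\<lambda>i. \<bar>a i\<bar>)"
  unfolding lat_abs_def by (auto simp: sup_fun_def sup_max abs_real_def max_def)

lemma fun_ldisj: "ldisj (a::nat \<Rightarrow> real) b \<longleftrightarrow> (\<forall>i. a i = 0 \<or> b i = 0)"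
proof -
  have "inf (\<lambda>i. \<bar>a i\<bar>) (\<lambda>i. \<bar>b i\<bar>) = (\<lambda>i. min \<bar>a i\<bar> \<bar>b i\<bar>)" by (rule ext) (simp only: inf_apply inf_min)
  moreover have "(\<lambda>i. min \<bar>a i\<bar> \<bar>b i\<bar>) = 0 \<longleftrightarrow> (\<forall>i. a i = 0 \<or> b i = 0)"
  proof
    assume h: "(\<lambda>i. min \<bar>a i\<bar> \<bar>b i\<bar>) = 0"
    show "\<forall>i. a i = 0 \<or> b i = 0"
    proof
      fix i have "min \<bar>a i\<bar> \<bar>b i\<bar> = 0" using fun_cong[OF h, of i] by simp
      then show "a i = 0 \<or> b i = 0" by (auto simp: min_def split: if_splits)
    qed
  next
    assume h: "\<forall>i. a i = 0 \<or> b i = 0"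
    show "(\<lambda>i. min \<bar>a i\<bar> \<bar>b i\<bar>) = 0"
    proof
      fix i show "min \<bar>a i\<bar> \<bar>b i\<bar> = 0 i" using h[rule_format, of i] by auto
    qed
  qed
  ultimately show ?thesis unfolding ldisj_def fun_lat_abs by simp
qed

lemma powr_sum_mono:
  assumes "\<And>j. j \<in> A \<Longrightarrow> 0 \<le> u j \<and> u j \<le> v j" "0 < (p::real)"
  shows "(\<Sum>j\<in>A. u j powr p) powr (1/p) \<le> (\<Sum>j\<in>A. v j powr p) powr (1/p)"
  using assms by (intro powr_mono2 sum_mono sum_nonneg) auto

lemma reindex_nz:
  fixes y :: "nat \<Rightarrow> 'b::zero"
  obtains m f where "bij_betw f {..<m} {i. i < n \<and> y i \<noteq> 0}" "m \<le> n"
proof -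
  obtain f where f: "bij_betw f {0..<card {i. i < n \<and> y i \<noteq> 0}} {i. i < n \<and> y i \<noteq> 0}"
    using ex_bij_betw_nat_finite[of "{i. i < n \<and> y i \<noteq> 0}"] by auto
  have "card {i. i < n \<and> y i \<noteq> 0} \<le> card {..<n}" by (intro card_mono) auto
  then show ?thesis using f that by (auto simp: atLeast0LessThan)
qed

lemma sum_reindex_nz:
  fixes g :: "nat \<Rightarrow> 'c::comm_monoid_add"
  assumes f: "bij_betw f {..<m} {i. i < n \<and> y i \<noteq> (0::'b::zero)}" and g: "\<And>i. y i = 0 \<Longrightarrow> g i = 0"
  shows "(\<Sum>i<n. g i) = (\<Sum>l<m. g (f l))"
proof -
  have "(\<Sum>i<n. g i) = (\<Sum>i\<in>{i. i < n \<and> y i \<noteq> 0}. g i)"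
    using g by (intro sum.mono_neutral_right) auto
  also have "\<dots> = (\<Sum>l<m. g (f l))" using sum.reindex_bij_betw[OF f, of g] by simp
  finally show ?thesis .
qed


context BL begin

section \<open>The space X_U\<close>

lemma Bn0: "(\<lambda>_. 0) \<in> Bn T 0" by (simp add: Bn_def pw_disj_def)

lemma XU_upper: "x \<in> Bn T n \<Longrightarrow> ereal (norm (\<Sum>i<n. a i *\<^sub>R x i)) \<le> XU_norm_e T a"
  unfolding XU_norm_e_def XU_n_def by (rule SUP_upper2[of n]) (auto intro: SUP_upper)

lemma XU_nonneg: "0 \<le> XU_norm_e T a"
  using XU_upper[OF Bn0, of a] by (simp add: zero_ereal_def)

lemma XU_bound: "(\<And>m x. x \<in> Bn T m \<Longrightarrow> norm (\<Sum>i<m. a i *\<^sub>R x i) \<le> R) \<Longrightarrow> XU_norm_e T a \<le> ereal R"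
  unfolding XU_norm_e_def XU_n_def by (intro SUP_least) auto

lemma XU_fin: "a \<in> XU_space T \<Longrightarrow> XU_norm_e T a = ereal (XU_norm T a)"
  unfolding XU_space_def XU_norm_def using XU_nonneg[of a] by (cases "XU_norm_e T a") auto

lemma XU_norm_nonneg: "0 \<le> XU_norm T a"
  unfolding XU_norm_def using XU_nonneg[of a] by (cases "XU_norm_e T a") auto

lemma XU_upper': "a \<in> XU_space T \<Longrightarrow> x \<in> Bn T n \<Longrightarrow> norm (\<Sum>i<n. a i *\<^sub>R x i) \<le> XU_norm T a"
  using XU_upper[of x n a] XU_fin[of a] by simp

lemma XU_norm_le: "(\<And>m x. x \<in> Bn T m \<Longrightarrow> norm (\<Sum>i<m. a i *\<^sub>R x i) \<le> R) \<Longrightarrow> 0 \<le> R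
   \<Longrightarrow> XU_norm T a \<le> R \<and> a \<in> XU_space T"
proof -
  assume b: "\<And>m x. x \<in> Bn T m \<Longrightarrow> norm (\<Sum>i<m. a i *\<^sub>R x i) \<le> R" and R: "0 \<le> R"
  have e: "XU_norm_e T a \<le> ereal R" by (rule XU_bound[OF b])
  then have "a \<in> XU_space T" unfolding XU_space_def by auto
  then show ?thesis using e XU_fin[of a] by auto
qed

lemma pw_disj_fun: "pw_disj n (a :: nat \<Rightarrow> nat \<Rightarrow> real) \<Longrightarrow> j < n \<Longrightarrow> k < n \<Longrightarrow> j \<noteq> k \<Longrightarrow> a j l = 0 \<or> a k l = 0"
  unfolding pw_disj_def fun_ldisj by blast

lemma sum_swap_vec: "(\<Sum>l<m. (\<Sum>j<n. a j) l *\<^sub>R (x l::'a)) = (\<Sum>j<n. \<Sum>l<m. a j l *\<^sub>R x l)"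
  unfolding sum_fun_apply scaleR_sum_left by (rule sum.swap)

lemma U1:
  assumes est: "upper_est (UNIV::'a set) norm p" and p: "1 \<le> p"
  shows "upper_est (XU_space T) (XU_norm T) p"
proof -
  obtain M where M: "\<And>n y. pw_disj n (y::nat \<Rightarrow> 'a) \<Longrightarrow> norm (\<Sum>i<n. y i) \<le> M * (\<Sum>i<n. norm (y i) powr p) powr (1 / p)"
    using est unfolding upper_est_def by auto
  define M' where "M' = max M 0"
  show ?thesis unfolding upper_est_def
  proof (intro exI[of _ M'] allI impI, elim conjE)
    fix n and a :: "nat \<Rightarrow> nat \<Rightarrow> real"
    assume aS: "\<forall>i<n. a i \<in> XU_space T" and ad: "pw_disj n a"
    define R where "R = M' * (\<Sum>j<n. XU_norm T (a j) powr p) powr (1 / p)"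
    have R0: "0 \<le> R" unfolding R_def M'_def by simp
    have "XU_norm T (\<Sum>j<n. a j) \<le> R \<and> (\<Sum>j<n. a j) \<in> XU_space T"
    proof (rule XU_norm_le[OF _ R0])
      fix m x assume x: "x \<in> Bn T m"
      define w where "w j = (\<Sum>l<m. a j l *\<^sub>R x l)" for j
      have xd: "pw_disj m x" using x by (simp add: Bn_def)
      have wd: "pw_disj n w" unfolding pw_disj_def w_def
        using R1[OF xd] pw_disj_fun[OF ad] by blast
      have "norm (\<Sum>l<m. (\<Sum>j<n. a j) l *\<^sub>R x l) = norm (\<Sum>j<n. w j)" by (simp add: sum_swap_vec w_def)
      also have "\<dots> \<le> M * (\<Sum>j<n. norm (w j) powr p) powr (1 / p)" by (rule M[OF wd])
      also have "\<dots> \<le> M' * (\<Sum>j<n. norm (w j) powr p) powr (1 / p)" unfolding M'_def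
        by (intro mult_right_mono) auto
      also have "\<dots> \<le> R" unfolding R_def
      proof (intro mult_left_mono powr_sum_mono)
        fix j assume "j \<in> {..<n}"
        then show "0 \<le> norm (w j) \<and> norm (w j) \<le> XU_norm T (a j)"
          using XU_upper'[of "a j" x m] aS x by (auto simp: w_def)
      qed (use p M'_def in auto)
      finally show "norm (\<Sum>l<m. (\<Sum>j<n. a j) l *\<^sub>R x l) \<le> R" .
    qed
    then show "XU_norm T (\<Sum>i<n. a i) \<le> M' * (\<Sum>i<n. XU_norm T (a i) powr p) powr (1 / p)"
      unfolding R_def by simp
  qed
qed


lemma pw_disj_reindex:
  assumes "pw_disj n (y::nat \<Rightarrow> 'a)" "bij_betw f {..<m} {i. i < n \<and> y i \<noteq> 0}"
  shows "pw_disj m (\<lambda>l. y (f l))"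
  unfolding pw_disj_def
proof (intro allI impI)
  fix i j assume ij: "i < m" "j < m" "i \<noteq> j"
  have "f i \<in> {i. i < n \<and> y i \<noteq> 0}" "f j \<in> {i. i < n \<and> y i \<noteq> 0}"
    using bij_betw_apply[OF assms(2)] ij by auto
  moreover have "f i \<noteq> f j" using inj_onD[OF bij_betw_imp_inj_on[OF assms(2)]] ij by auto
  ultimately have "f i < n" "f j < n" "f i \<noteq> f j" by auto
  then show "ldisj (y (f i)) (y (f j))" using assms(1) by (auto simp: pw_disj_def)
qed

lemma nz_reduce_upper:
  assumes h: "\<And>n y. pw_disj n (y::nat \<Rightarrow> 'a) \<Longrightarrow> (\<forall>i<n. y i \<noteq> 0)
     \<Longrightarrow> norm (\<Sum>i<n. y i) \<le> M * (\<Sum>i<n. norm (y i) powr p) powr (1 / p)"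
  shows "upper_est (UNIV::'a set) norm p"
  unfolding upper_est_def
proof (intro exI[of _ M] allI impI, elim conjE)
  fix n and y :: "nat \<Rightarrow> 'a" assume yd: "pw_disj n y"
  obtain m f where f: "bij_betw f {..<m} {i. i < n \<and> y i \<noteq> 0}" "m \<le> n" by (rule reindex_nz)
  have s1: "(\<Sum>i<n. y i) = (\<Sum>l<m. y (f l))" using sum_reindex_nz[OF f(1), of "\<lambda>i. y i"] by simp
  have s2: "(\<Sum>i<n. norm (y i) powr p) = (\<Sum>l<m. norm (y (f l)) powr p)"
    using sum_reindex_nz[OF f(1), of "\<lambda>i. norm (y i) powr p"] by simp
  have nz: "\<forall>l<m. y (f l) \<noteq> 0" using bij_betw_apply[OF f(1)] by auto
  show "norm (\<Sum>i<n. y i) \<le> M * (\<Sum>i<n. norm (y i) powr p) powr (1 / p)"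
    unfolding s1 s2 using h[OF pw_disj_reindex[OF yd f(1)] nz] .
qed

lemma nz_reduce_lower:
  assumes h: "\<And>n y. pw_disj n (y::nat \<Rightarrow> 'a) \<Longrightarrow> (\<forall>i<n. y i \<noteq> 0)
     \<Longrightarrow> (\<Sum>i<n. norm (y i) powr p) powr (1 / p) \<le> M * norm (\<Sum>i<n. y i)"
  shows "lower_est (UNIV::'a set) norm p"
  unfolding lower_est_def
proof (intro exI[of _ M] allI impI, elim conjE)
  fix n and y :: "nat \<Rightarrow> 'a" assume yd: "pw_disj n y"
  obtain m f where f: "bij_betw f {..<m} {i. i < n \<and> y i \<noteq> 0}" "m \<le> n" by (rule reindex_nz)
  have s1: "(\<Sum>i<n. y i) = (\<Sum>l<m. y (f l))" using sum_reindex_nz[OF f(1), of "\<lambda>i. y i"] by simp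
  have s2: "(\<Sum>i<n. norm (y i) powr p) = (\<Sum>l<m. norm (y (f l)) powr p)"
    using sum_reindex_nz[OF f(1), of "\<lambda>i. norm (y i) powr p"] by simp
  have nz: "\<forall>l<m. y (f l) \<noteq> 0" using bij_betw_apply[OF f(1)] by auto
  show "(\<Sum>i<n. norm (y i) powr p) powr (1 / p) \<le> M * norm (\<Sum>i<n. y i)"
    unfolding s1 s2 using h[OF pw_disj_reindex[OF yd f(1)] nz] .
qed

lemma normalize_Bn:
  assumes "pw_disj n (y::nat \<Rightarrow> 'a)" "\<forall>i<n. y i \<noteq> 0"
  shows "(\<lambda>i. (1 / norm (y i)) *\<^sub>R y i) \<in> Bn T n"
  using assms unfolding Bn_def pw_disj_def by (auto intro: ldisj_scale)

lemma sum_unit_vec: fixes m :: nat shows "(\<Sum>l<m. (if l = i then c else 0) *\<^sub>R (x l::'a)) = (if i < m then c *\<^sub>R x i else 0)"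
  by (induction m) (auto simp: less_Suc_eq)

lemma sum_unit_vec_fun: fixes n :: nat and t :: "nat \<Rightarrow> real" shows "(\<Sum>i<n. (\<lambda>l. if l = i then t i else (0::real))) = (\<lambda>l. if l < n then t l else 0)"
proof (rule ext)
  fix l
  have "(\<Sum>i<n. (\<lambda>l. if l = i then t i else (0::real))) l = (\<Sum>i<n. if l = i then t i else 0)"
    by (rule sum_fun_apply)
  also have "\<dots> = (if l \<in> {..<n} then t l else 0)" using sum.delta'[OF finite_lessThan[of n], of l t] by simp
  finally show "(\<Sum>i<n. (\<lambda>l. if l = i then t i else (0::real))) l = (if l < n then t l else 0)" by simp
qed

lemma U2:
  assumes est: "upper_est (XU_space T) (XU_norm T) p" and p: "1 \<le> p"
  shows "upper_est (UNIV::'a set) norm p"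
proof -
  obtain M where M: "\<And>n a. (\<forall>i<n. a i \<in> XU_space T) \<Longrightarrow> pw_disj n a \<Longrightarrow>
      XU_norm T (\<Sum>i<n. a i) \<le> M * (\<Sum>i<n. XU_norm T (a i) powr p) powr (1 / p)"
    using est unfolding upper_est_def by blast
  define M' where "M' = max M 0"
  show ?thesis
  proof (rule nz_reduce_upper[of M'])
    fix n and y :: "nat \<Rightarrow> 'a" assume yd: "pw_disj n y" and nz: "\<forall>i<n. y i \<noteq> 0"
    define t where "t i = norm (y i)" for i
    define e where "e i = (\<lambda>l. if l = i then t i else (0::real))" for i
    define t' where "t' = (\<lambda>l. if l < n then t l else (0::real))"
    have yh: "(\<lambda>i. (1 / t i) *\<^sub>R y i) \<in> Bn T n" using normalize_Bn[OF yd nz] by (simp add: t_def)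
    have eS: "XU_norm T (e i) \<le> t i \<and> e i \<in> XU_space T" for i
    proof (rule XU_norm_le)
      fix m x assume "x \<in> Bn T m"
      then show "norm (\<Sum>l<m. e i l *\<^sub>R x l) \<le> t i"
        by (auto simp: e_def sum_unit_vec Bn_def t_def)
    qed (simp add: t_def)
    have ed: "pw_disj n e" unfolding pw_disj_def fun_ldisj e_def by auto
    have te: "(\<Sum>i<n. e i) = t'" unfolding e_def t'_def by (rule sum_unit_vec_fun)
    have t'S: "XU_norm T t' \<le> (\<Sum>i<n. t i) \<and> t' \<in> XU_space T"
    proof (rule XU_norm_le)
      fix m x assume x: "x \<in> Bn T m"
      have "norm (\<Sum>l<m. t' l *\<^sub>R x l) \<le> (\<Sum>l<m. norm (t' l *\<^sub>R x l))" by (rule norm_sum)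
      also have "\<dots> = (\<Sum>l<m. (if l < n then t l else 0))"
        using x by (intro sum.cong) (auto simp: Bn_def t'_def t_def)
      also have "\<dots> = (\<Sum>l\<in>{..<m} \<inter> {..<n}. t l)" by (simp add: sum.inter_restrict)
      also have "\<dots> \<le> (\<Sum>l<n. t l)" by (intro sum_mono2) (auto simp: t_def)
      finally show "norm (\<Sum>l<m. t' l *\<^sub>R x l) \<le> (\<Sum>l<n. t l)" .
    qed (auto simp: t_def intro: sum_nonneg)
    have "norm (\<Sum>i<n. y i) = norm (\<Sum>l<n. t' l *\<^sub>R ((1 / t l) *\<^sub>R y l))"
      using nz by (intro arg_cong[where f=norm] sum.cong) (auto simp: t'_def t_def)
    also have "\<dots> \<le> XU_norm T t'" by (rule XU_upper'[OF conjunct2[OF t'S] yh])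
    also have "\<dots> \<le> M * (\<Sum>i<n. XU_norm T (e i) powr p) powr (1 / p)"
      using M[of n e] eS ed te by auto
    also have "\<dots> \<le> M' * (\<Sum>i<n. XU_norm T (e i) powr p) powr (1 / p)"
      unfolding M'_def by (intro mult_right_mono) auto
    also have "\<dots> \<le> M' * (\<Sum>i<n. norm (y i) powr p) powr (1 / p)"
    proof (intro mult_left_mono powr_sum_mono)
      fix j assume "j \<in> {..<n}"
      show "0 \<le> XU_norm T (e j) \<and> XU_norm T (e j) \<le> norm (y j)"
        using eS[of j] XU_norm_nonneg[of "e j"] by (simp add: t_def)
    qed (use p M'_def in auto)
    finally show "norm (\<Sum>i<n. y i) \<le> M' * (\<Sum>i<n. norm (y i) powr p) powr (1 / p)" .
  qed
qed

end

locale BLI = BL + assumes infd: "infinite_dimensional T"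
begin

section \<open>The space X_L\<close>

lemma Bn_ne': "Bn T n \<noteq> {}" using Bn_ne[OF infd] .

lemma Phi_bdd: "bdd_below ((\<lambda>x. norm (\<Sum>i<n. a i *\<^sub>R (x i::'a))) ` Bn T n)"
  by (rule bdd_belowI[of _ 0]) auto

lemma Phi_le: "x \<in> Bn T n \<Longrightarrow> Phi_n T n a \<le> norm (\<Sum>i<n. a i *\<^sub>R x i)"
  unfolding Phi_n_def by (rule cINF_lower[OF Phi_bdd])

lemma Phi_ge: "(\<And>x. x \<in> Bn T n \<Longrightarrow> c \<le> norm (\<Sum>i<n. a i *\<^sub>R x i)) \<Longrightarrow> c \<le> Phi_n T n a"
  unfolding Phi_n_def by (rule cINF_greatest[OF Bn_ne'])

lemma Phi_nonneg: "0 \<le> Phi_n T n a" by (rule Phi_ge) auto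

lemma Phi_ge_coord: "i < n \<Longrightarrow> \<bar>a i\<bar> \<le> Phi_n T n a"
proof (rule Phi_ge)
  fix x assume i: "i < n" and x: "x \<in> Bn T n"
  have xd: "pw_disj n x" and xn: "norm (x i) = 1" using x i by (auto simp: Bn_def)
  have "\<bar>a i\<bar> = norm (\<Sum>l<n. (if l = i then a i else 0) *\<^sub>R x l)" using xn i by (simp add: sum_unit_vec)
  also have "\<dots> \<le> norm (\<Sum>l<n. a l *\<^sub>R x l)" by (rule M1[OF xd]) auto
  finally show "\<bar>a i\<bar> \<le> norm (\<Sum>i<n. a i *\<^sub>R x i)" .
qed

lemma Bn_prefix: "x \<in> Bn T n' \<Longrightarrow> n \<le> n' \<Longrightarrow> x \<in> Bn T n"
  unfolding Bn_def pw_disj_def by auto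

lemma Phi_mono_n: "n \<le> n' \<Longrightarrow> Phi_n T n a \<le> Phi_n T n' a"
proof (rule Phi_ge)
  fix x assume nn: "n \<le> n'" and x: "x \<in> Bn T n'"
  have xd: "pw_disj n' x" using x by (auto simp: Bn_def)
  have "Phi_n T n a \<le> norm (\<Sum>i<n. a i *\<^sub>R x i)" by (rule Phi_le[OF Bn_prefix[OF x nn]])
  also have "(\<Sum>i<n. a i *\<^sub>R x i) = (\<Sum>i<n'. (if i < n then a i else 0) *\<^sub>R x i)"
  proof -
    have "(\<Sum>i<n'. (if i < n then a i else 0) *\<^sub>R x i) = (\<Sum>i<n'. if i \<in> {..<n} then a i *\<^sub>R x i else 0)"
      by (rule sum.cong) auto
    also have "\<dots> = (\<Sum>i\<in>{..<n'} \<inter> {..<n}. a i *\<^sub>R x i)" by (rule sum.inter_restrict[symmetric]) simp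
    also have "{..<n'} \<inter> {..<n} = {..<n}" using nn by auto
    finally show ?thesis by simp
  qed
  also have "norm \<dots> \<le> norm (\<Sum>i<n'. a i *\<^sub>R x i)" by (rule M1[OF xd]) auto
  finally show "Phi_n T n a \<le> norm (\<Sum>i<n'. a i *\<^sub>R x i)" .
qed

definition Dec :: "nat \<Rightarrow> (nat \<Rightarrow> real) \<Rightarrow> (nat \<times> (nat \<Rightarrow> nat \<Rightarrow> real)) set" where
  "Dec n a = {(m, b). \<forall>i<n. a i = (\<Sum>k<m. b k i)}"

lemma XL_def': "XL_n T n a = (INF p\<in>Dec n a. (\<Sum>k<fst p. Phi_n T n (snd p k)))"
  unfolding XL_n_def Dec_def by (simp add: case_prod_beta')

lemma Dec_ne: "(1, \<lambda>_. a) \<in> Dec n a" by (simp add: Dec_def)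

lemma XL_bdd: "bdd_below ((\<lambda>p. (\<Sum>k<fst p. Phi_n T n (snd p k))) ` Dec n a)"
  by (rule bdd_belowI[of _ 0]) (auto intro: sum_nonneg Phi_nonneg)

lemma XL_le: "(m, b) \<in> Dec n a \<Longrightarrow> XL_n T n a \<le> (\<Sum>k<m. Phi_n T n (b k))"
  unfolding XL_def' using cINF_lower[OF XL_bdd, of "(m, b)"] by simp

lemma XL_ge: "(\<And>m b. (m, b) \<in> Dec n a \<Longrightarrow> c \<le> (\<Sum>k<m. Phi_n T n (b k))) \<Longrightarrow> c \<le> XL_n T n a"
  unfolding XL_def' by (rule cINF_greatest) (use Dec_ne[of a n] in auto)

lemma XL_nonneg: "0 \<le> XL_n T n a" by (rule XL_ge) (auto intro: sum_nonneg Phi_nonneg)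

lemma XL_le_Phi: "XL_n T n a \<le> Phi_n T n a" using XL_le[OF Dec_ne] by simp

lemma XL_ge_coord: "i < n \<Longrightarrow> \<bar>a i\<bar> \<le> XL_n T n a"
proof (rule XL_ge)
  fix m b assume i: "i < n" and d: "(m, b) \<in> Dec n a"
  have "\<bar>a i\<bar> = \<bar>\<Sum>k<m. b k i\<bar>" using d i by (simp add: Dec_def)
  also have "\<dots> \<le> (\<Sum>k<m. \<bar>b k i\<bar>)" by (rule sum_abs)
  also have "\<dots> \<le> (\<Sum>k<m. Phi_n T n (b k))" by (intro sum_mono Phi_ge_coord i)
  finally show "\<bar>a i\<bar> \<le> (\<Sum>k<m. Phi_n T n (b k))" .
qed

lemma XL_mono_n: "n \<le> n' \<Longrightarrow> XL_n T n a \<le> XL_n T n' a"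
proof (rule XL_ge)
  fix m b assume nn: "n \<le> n'" and d: "(m, b) \<in> Dec n' a"
  have "(m, b) \<in> Dec n a" using d nn by (auto simp: Dec_def)
  then have "XL_n T n a \<le> (\<Sum>k<m. Phi_n T n (b k))" by (rule XL_le)
  also have "\<dots> \<le> (\<Sum>k<m. Phi_n T n' (b k))" by (intro sum_mono Phi_mono_n nn)
  finally show "XL_n T n a \<le> (\<Sum>k<m. Phi_n T n' (b k))" .
qed


lemma sum_concat: "(\<Sum>k<m1 + m2. f k) = (\<Sum>k<m1. f k) + (\<Sum>k<m2. f (m1 + k))" for f :: "nat \<Rightarrow> real"
  by (induction m2) auto

lemma XL_subadd: "XL_n T n (a + a') \<le> XL_n T n a + XL_n T n a'"
proof -
  have key: "XL_n T n (a + a') \<le> (\<Sum>k<m1. Phi_n T n (b1 k)) + (\<Sum>k<m2. Phi_n T n (b2 k))"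
    if d1: "(m1, b1) \<in> Dec n a" and d2: "(m2, b2) \<in> Dec n a'" for m1 b1 m2 b2
  proof -
    define bc where "bc k = (if k < m1 then b1 k else b2 (k - m1))" for k
    have "(m1 + m2, bc) \<in> Dec n (a + a')"
      using d1 d2 by (auto simp: Dec_def sum_concat bc_def)
    then have "XL_n T n (a + a') \<le> (\<Sum>k<m1 + m2. Phi_n T n (bc k))" by (rule XL_le)
    also have "\<dots> = (\<Sum>k<m1. Phi_n T n (b1 k)) + (\<Sum>k<m2. Phi_n T n (b2 k))"
      by (simp add: sum_concat bc_def)
    finally show ?thesis .
  qed
  have "XL_n T n (a + a') - (\<Sum>k<m2. Phi_n T n (b2 k)) \<le> XL_n T n a" if d2: "(m2, b2) \<in> Dec n a'" for m2 b2
    by (rule XL_ge) (use key d2 in force)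
  then have "XL_n T n (a + a') - XL_n T n a \<le> XL_n T n a'"
    by (intro XL_ge) force
  then show ?thesis by simp
qed

lemma XL_zero: "XL_n T n 0 = 0"
proof -
  obtain x where x: "x \<in> Bn T n" using Bn_ne' by blast
  have "XL_n T n 0 \<le> Phi_n T n 0" by (rule XL_le_Phi)
  also have "\<dots> \<le> 0" using Phi_le[OF x, of 0] by simp
  finally show ?thesis using XL_nonneg[of n 0] by simp
qed

lemma XL_sum: fixes r :: nat shows "XL_n T n (\<Sum>j<r. a j) \<le> (\<Sum>j<r. XL_n T n (a j))"
proof (induction r)
  case 0
  then show ?case using XL_zero[of n] by (simp add: zero_fun_def)
next
  case (Suc r)
  have "XL_n T n (\<Sum>j<Suc r. a j) \<le> XL_n T n (\<Sum>j<r. a j) + XL_n T n (a r)"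
    using XL_subadd[of n "\<Sum>j<r. a j" "a r"] by (simp only: sum.lessThan_Suc)
  then show ?case using Suc by (simp only: sum.lessThan_Suc)
qed

lemma XL_upper: "ereal (XL_n T n a) \<le> XL_norm_e T a"
  unfolding XL_norm_e_def by (rule SUP_upper) simp

lemma XL_fin: "a \<in> XL_space T \<Longrightarrow> XL_norm_e T a = ereal (XL_norm T a)"
  unfolding XL_space_def XL_norm_def using XL_upper[of 0 a] XL_nonneg[of 0 a]
  by (cases "XL_norm_e T a") auto

lemma XL_norm_nonneg: "0 \<le> XL_norm T a"
  unfolding XL_norm_def using XL_upper[of 0 a] XL_nonneg[of 0 a] by (cases "XL_norm_e T a") auto

lemma XL_upper': "a \<in> XL_space T \<Longrightarrow> XL_n T n a \<le> XL_norm T a"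
  using XL_upper[of n a] XL_fin[of a] by simp

lemma XL_norm_le: "(\<And>n. XL_n T n a \<le> R) \<Longrightarrow> XL_norm T a \<le> R \<and> a \<in> XL_space T"
proof -
  assume b: "\<And>n. XL_n T n a \<le> R"
  have e: "XL_norm_e T a \<le> ereal R" unfolding XL_norm_e_def by (intro SUP_least) (use b in auto)
  then have "a \<in> XL_space T" unfolding XL_space_def by auto
  then show ?thesis using e XL_fin[of a] by auto
qed

lemma XL_lim: "a \<in> XL_space T \<Longrightarrow> (\<lambda>n. XL_n T n a) \<longlonglongrightarrow> XL_norm T a"
proof -
  assume aS: "a \<in> XL_space T"
  have bdd: "bdd_above (range (\<lambda>n. XL_n T n a))" using XL_upper'[OF aS] by (intro bdd_aboveI[of _ "XL_norm T a"]) auto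
  have inc: "incseq (\<lambda>n. XL_n T n a)" by (rule incseq_SucI) (rule XL_mono_n, simp)
  have lim: "(\<lambda>n. XL_n T n a) \<longlonglongrightarrow> (SUP n. XL_n T n a)" by (rule LIMSEQ_incseq_SUP[OF bdd inc])
  have fin: "\<bar>SUP n. ereal (XL_n T n a)\<bar> \<noteq> \<infinity>"
    using aS XL_fin[OF aS] unfolding XL_norm_e_def by simp
  have "ereal (SUP n. XL_n T n a) = (SUP n. ereal (XL_n T n a))" by (rule ereal_SUP[OF fin])
  then have "XL_norm T a = (SUP n. XL_n T n a)" unfolding XL_norm_def XL_norm_e_def by (metis real_of_ereal.simps(1))
  then show ?thesis using lim by simp
qed


lemma sum_single_support:
  fixes c :: real and r :: nat
  assumes "\<And>j j'. j < r \<Longrightarrow> j' < r \<Longrightarrow> j \<noteq> j' \<Longrightarrow> \<not> (P j \<and> P j')"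
  shows "\<bar>\<Sum>j<r. if P j then c else 0\<bar> \<le> \<bar>c\<bar>"
proof -
  have "(\<Sum>j<r. if P j then c else 0) = (\<Sum>j<r. if j \<in> {j. P j} then c else 0)" by simp
  also have "\<dots> = (\<Sum>j\<in>{..<r} \<inter> {j. P j}. c)"
    by (rule sum.inter_restrict[symmetric]) simp
  also have "{..<r} \<inter> {j. P j} = {j. j < r \<and> P j}" by auto
  also have "(\<Sum>j\<in>{j. j < r \<and> P j}. c) = of_nat (card {j. j < r \<and> P j}) * c" by simp
  finally have e: "(\<Sum>j<r. if P j then c else 0) = of_nat (card {j. j < r \<and> P j}) * c" .
  have "card {j. j < r \<and> P j} \<le> Suc 0"
    using assms by (subst card_le_Suc0_iff_eq) auto
  then have "of_nat (card {j. j < r \<and> P j}) \<le> (1::real)" by simp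
  then show ?thesis unfolding e by (simp add: abs_mult mult_left_le_one_le)
qed

lemma L1:
  assumes est: "lower_est (UNIV::'a set) norm q" and q: "1 \<le> q"
  shows "lower_est (XL_space T) (XL_norm T) q"
proof -
  obtain M where M: "\<And>n y. pw_disj n (y::nat \<Rightarrow> 'a) \<Longrightarrow> (\<Sum>i<n. norm (y i) powr q) powr (1 / q) \<le> M * norm (\<Sum>i<n. y i)"
    using est unfolding lower_est_def by auto
  define M' where "M' = max M 1"
  have M'p: "0 < M'" unfolding M'_def by simp
  have M': "(\<Sum>i<n. norm (y i) powr q) powr (1 / q) \<le> M' * norm (\<Sum>i<n. y i)" if "pw_disj n (y::nat \<Rightarrow> 'a)" for n y
    using M[OF that] by (rule order_trans) (auto simp: M'_def intro: mult_right_mono)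
  have qp: "0 < q" using q by simp
  show ?thesis unfolding lower_est_def
  proof (intro exI[of _ M'] allI impI, elim conjE)
    fix r and a :: "nat \<Rightarrow> nat \<Rightarrow> real"
    assume aS: "\<forall>i<r. a i \<in> XL_space T" and ad: "pw_disj r a"
    define A where "A = (\<Sum>j<r. a j)"
    have Ai: "A i = (\<Sum>j<r. a j i)" for i unfolding A_def by (rule sum_fun_apply)
    have dis: "a j i = 0 \<or> a j' i = 0" if "j < r" "j' < r" "j \<noteq> j'" for j j' i
      using pw_disj_fun[OF ad that] .
    have AS: "A \<in> XL_space T"
    proof -
      have "XL_n T n A \<le> (\<Sum>j<r. XL_norm T (a j))" for n
      proof -
        have "XL_n T n A \<le> (\<Sum>j<r. XL_n T n (a j))" unfolding A_def by (rule XL_sum)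
        also have "\<dots> \<le> (\<Sum>j<r. XL_norm T (a j))" using aS by (intro sum_mono XL_upper') auto
        finally show ?thesis .
      qed
      then show ?thesis using XL_norm_le by blast
    qed
    have step: "(\<Sum>j<r. XL_n T n (a j) powr q) powr (1 / q) \<le> M' * XL_n T n A" for n
    proof -
      have "(\<Sum>j<r. XL_n T n (a j) powr q) powr (1 / q) / M' \<le> XL_n T n A"
      proof (rule XL_ge)
        fix m b assume d: "(m, b) \<in> Dec n A"
        define bj where "bj k j = (\<lambda>i. if a j i \<noteq> 0 then b k i else 0)" for k j
        have dj: "(m, \<lambda>k. bj k j) \<in> Dec n (a j)" if j: "j < r" for j
          unfolding Dec_def
        proof (clarify)
          fix i assume i: "i < n"
          show "a j i = (\<Sum>k<m. bj k j i)"
          proof (cases "a j i = 0")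
            case True
            then show ?thesis by (simp add: bj_def)
          next
            case False
            have "A i = a j i"
            proof -
              have "A i = (\<Sum>j'<r. a j' i)" by (rule Ai)
              also have "\<dots> = a j i + (\<Sum>j'\<in>{..<r} - {j}. a j' i)" using j by (simp add: sum.remove)
              also have "(\<Sum>j'\<in>{..<r} - {j}. a j' i) = 0" using j False dis by (intro sum.neutral) blast
              finally show ?thesis by simp
            qed
            moreover have "A i = (\<Sum>k<m. b k i)" using d i by (simp add: Dec_def)
            ultimately show ?thesis using False by (simp add: bj_def)
          qed
        qed
        have phik: "(\<Sum>j<r. Phi_n T n (bj k j) powr q) powr (1/q) \<le> M' * Phi_n T n (b k)" for k
        proof -
          have "(\<Sum>j<r. Phi_n T n (bj k j) powr q) powr (1/q) / M' \<le> Phi_n T n (b k)"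
          proof (rule Phi_ge)
            fix x assume x: "x \<in> Bn T n"
            have xd: "pw_disj n x" using x by (simp add: Bn_def)
            define w where "w j = (\<Sum>i<n. bj k j i *\<^sub>R x i)" for j
            have wd: "pw_disj r w" unfolding pw_disj_def w_def
            proof (intro allI impI)
              fix j j' assume "j < r" "j' < r" "j \<noteq> j'"
              then show "ldisj (\<Sum>i<n. bj k j i *\<^sub>R x i) (\<Sum>i<n. bj k j' i *\<^sub>R x i)"
                using dis by (intro R1[OF xd]) (auto simp: bj_def)
            qed
            have "(\<Sum>j<r. Phi_n T n (bj k j) powr q) powr (1/q) \<le> (\<Sum>j<r. norm (w j) powr q) powr (1/q)"
              by (intro powr_sum_mono qp) (auto simp: w_def intro: Phi_nonneg Phi_le[OF x])
            also have "\<dots> \<le> M' * norm (\<Sum>j<r. w j)" by (rule M'[OF wd])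
            also have "norm (\<Sum>j<r. w j) \<le> norm (\<Sum>i<n. b k i *\<^sub>R x i)"
            proof -
              have "(\<Sum>j<r. w j) = (\<Sum>i<n. (\<Sum>j<r. bj k j i) *\<^sub>R x i)"
                unfolding w_def scaleR_sum_left by (rule sum.swap)
              also have "norm \<dots> \<le> norm (\<Sum>i<n. b k i *\<^sub>R x i)"
              proof (rule M1[OF xd])
                fix i assume "i < n"
                show "\<bar>\<Sum>j<r. bj k j i\<bar> \<le> \<bar>b k i\<bar>" unfolding bj_def
                  by (rule sum_single_support) (use dis in blast)
              qed
              finally show ?thesis .
            qed
            then have "M' * norm (\<Sum>j<r. w j) \<le> M' * norm (\<Sum>i<n. b k i *\<^sub>R x i)"
              using M'p by (intro mult_left_mono) auto
            finally show "(\<Sum>j<r. Phi_n T n (bj k j) powr q) powr (1/q) / M' \<le> norm (\<Sum>i<n. b k i *\<^sub>R x i)"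
              using M'p by (simp add: divide_le_eq mult.commute)
          qed
          then show ?thesis using M'p by (simp add: divide_le_eq mult.commute)
        qed
        have "(\<Sum>j<r. XL_n T n (a j) powr q) powr (1 / q) \<le> (\<Sum>j<r. (\<Sum>k<m. Phi_n T n (bj k j)) powr q) powr (1 / q)"
          by (intro powr_sum_mono qp) (auto intro: XL_nonneg XL_le dj)
        also have "\<dots> \<le> (\<Sum>k<m. (\<Sum>j<r. Phi_n T n (bj k j) powr q) powr (1/q))"
          by (rule minkN[OF q]) (auto intro: Phi_nonneg)
        also have "\<dots> \<le> (\<Sum>k<m. M' * Phi_n T n (b k))" by (intro sum_mono phik)
        also have "\<dots> = M' * (\<Sum>k<m. Phi_n T n (b k))" by (simp add: sum_distrib_left)
        finally show "(\<Sum>j<r. XL_n T n (a j) powr q) powr (1 / q) / M' \<le> (\<Sum>k<m. Phi_n T n (b k))"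
          using M'p by (simp add: divide_le_eq mult.commute)
      qed
      then show ?thesis using M'p by (simp add: divide_le_eq mult.commute)
    qed
    have lim: "(\<lambda>n. (\<Sum>j<r. XL_n T n (a j) powr q) powr (1 / q)) \<longlonglongrightarrow> (\<Sum>j<r. XL_norm T (a j) powr q) powr (1 / q)"
    proof (rule tendsto_powr')
      show "(\<lambda>n. \<Sum>j<r. XL_n T n (a j) powr q) \<longlonglongrightarrow> (\<Sum>j<r. XL_norm T (a j) powr q)"
      proof (rule tendsto_sum)
        fix j assume "j \<in> {..<r}"
        then have "(\<lambda>n. XL_n T n (a j)) \<longlonglongrightarrow> XL_norm T (a j)" using aS by (intro XL_lim) auto
        then show "(\<lambda>n. XL_n T n (a j) powr q) \<longlonglongrightarrow> XL_norm T (a j) powr q"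
          using qp by (intro tendsto_powr') (auto intro!: always_eventually XL_nonneg)
      qed
    qed (use qp in \<open>auto intro!: always_eventually allI sum_nonneg\<close>)
    have "(\<Sum>j<r. XL_norm T (a j) powr q) powr (1 / q) \<le> M' * XL_norm T A"
    proof (rule LIMSEQ_le_const2[OF lim], intro exI allI impI)
      fix n
      show "(\<Sum>j<r. XL_n T n (a j) powr q) powr (1 / q) \<le> M' * XL_norm T A"
        using step[of n] XL_upper'[OF AS, of n] M'p by (meson mult_left_mono less_imp_le order_trans)
    qed
    then show "(\<Sum>i<r. XL_norm T (a i) powr q) powr (1 / q) \<le> M' * XL_norm T (\<Sum>i<r. a i)"
      unfolding A_def .
  qed
qed


lemma sum_subset_le': "finite B \<Longrightarrow> A \<subseteq> B \<Longrightarrow> (\<And>x. x \<in> B \<Longrightarrow> 0 \<le> f x) \<Longrightarrow> sum f A \<le> (sum f B :: 'a)"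
proof -
  assume h: "finite B" "A \<subseteq> B" "\<And>x. x \<in> B \<Longrightarrow> 0 \<le> f x"
  have "sum f B = sum f (B - A) + sum f A" using h by (simp add: sum.subset_diff)
  moreover have "0 \<le> sum f (B - A)" using h by (intro sum_nonneg') auto
  ultimately show ?thesis by (simp add: L.add_increasing)
qed

lemma L2:
  assumes est: "lower_est (XL_space T) (XL_norm T) q" and q: "1 \<le> q"
  shows "lower_est (UNIV::'a set) norm q"
proof -
  obtain M where M: "\<And>n a. (\<forall>i<n. a i \<in> XL_space T) \<Longrightarrow> pw_disj n a \<Longrightarrow>
      (\<Sum>i<n. XL_norm T (a i) powr q) powr (1 / q) \<le> M * XL_norm T (\<Sum>i<n. a i)"
    using est unfolding lower_est_def by blast
  define M' where "M' = max M 0"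
  have qp: "0 < q" using q by simp
  show ?thesis
  proof (rule nz_reduce_lower[where M="2 * M'"])
    fix n and y :: "nat \<Rightarrow> 'a" assume yd: "pw_disj n y" and nz: "\<forall>i<n. y i \<noteq> 0"
    define t where "t i = norm (y i)" for i
    define e where "e i = (\<lambda>l. if l = i then t i else (0::real))" for i
    define t' where "t' = (\<lambda>l. if l < n then t l else (0::real))"
    have eS: "e i \<in> XL_space T" for i
    proof -
      have "XL_n T m (e i) \<le> t i" for m
      proof -
        obtain x where x: "x \<in> Bn T m" using Bn_ne' by blast
        have "XL_n T m (e i) \<le> Phi_n T m (e i)" by (rule XL_le_Phi)
        also have "\<dots> \<le> norm (\<Sum>l<m. e i l *\<^sub>R x l)" by (rule Phi_le[OF x])
        also have "\<dots> \<le> t i" using x by (auto simp: e_def sum_unit_vec Bn_def t_def)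
        finally show ?thesis .
      qed
      then show ?thesis using XL_norm_le by blast
    qed
    have eN: "t i \<le> XL_norm T (e i)" if "i < n" for i
    proof -
      have "t i = \<bar>e i i\<bar>" by (simp add: e_def t_def)
      also have "\<dots> \<le> XL_n T (Suc i) (e i)" by (rule XL_ge_coord) simp
      also have "\<dots> \<le> XL_norm T (e i)" by (rule XL_upper'[OF eS])
      finally show ?thesis .
    qed
    have ed: "pw_disj n e" unfolding pw_disj_def fun_ldisj e_def by auto
    have te: "(\<Sum>i<n. e i) = t'" unfolding e_def t'_def by (rule sum_unit_vec_fun)
    have t'b: "XL_norm T t' \<le> 2 * norm (\<Sum>i<n. y i)"
    proof -
      have "XL_n T N t' \<le> 2 * norm (\<Sum>i<n. y i)" for N
      proof -
        obtain x z where xz: "\<forall>i<n. 0 \<le> x i \<and> x i \<le> lat_abs (y i) \<and> norm (lat_abs (y i)) \<le> 2 * norm (x i)"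
          "dfam N z" "\<forall>i<n. \<forall>j<N. inf (x i) (z j) = 0"
          using room[OF infd, of "\<lambda>i. lat_abs (y i)" n N] by auto
        have xnz: "x i \<noteq> 0" and xn: "t i \<le> 2 * norm (x i)" if "i < n" for i
          using xz(1) nz that by (auto simp: t_def)
        have zz: "0 \<le> z j" "z j \<noteq> 0" if "j < N" for j using xz(2) that by (auto simp: dfam_def)
        define v where "v l = (if l < n then x l else z l)" for l
        define u where "u l = (1 / norm (v l)) *\<^sub>R v l" for l
        have vp: "0 \<le> v l" "v l \<noteq> 0" if "l < N" for l
          using that xz(1) xnz zz by (auto simp: v_def)
        have vd: "inf (v l) (v l') = 0" if "l < N" "l' < N" "l \<noteq> l'" for l l'
        proof (cases "l < n")
          case True
          note l = True
          show ?thesis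
          proof (cases "l' < n")
            case True
            have "inf (lat_abs (y l)) (lat_abs (y l')) = 0" using yd l True that(3) by (auto simp: pw_disj_def ldisj_def)
            then have "inf (x l) (lat_abs (y l')) = 0" using D1[of "x l" "lat_abs (y l)" "lat_abs (y l')"] xz(1) l by auto
            then have "inf (lat_abs (y l')) (x l) = 0" by (simp add: inf_commute)
            then have "inf (x l') (x l) = 0" using D1[of "x l'" "lat_abs (y l')" "x l"] xz(1) l True by auto
            then show ?thesis using l True by (simp add: v_def inf_commute)
          next
            case False
            then show ?thesis using l xz(3) that by (simp add: v_def)
          qed
        next
          case False
          note l = False
          show ?thesis
          proof (cases "l' < n")
            case True
            then show ?thesis using l xz(3) that by (simp add: v_def inf_commute)
          next
            case False
            then show ?thesis using l xz(2) that by (simp add: v_def dfam_def)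
          qed
        qed
        have uB: "u \<in> Bn T N" unfolding u_def
          by (rule dfam_Bn) (use vp vd in \<open>auto simp: dfam_def\<close>)
        have ud: "pw_disj N u" using uB by (simp add: Bn_def)
        have "XL_n T N t' \<le> Phi_n T N t'" by (rule XL_le_Phi)
        also have "\<dots> \<le> norm (\<Sum>l<N. t' l *\<^sub>R u l)" by (rule Phi_le[OF uB])
        also have "\<dots> \<le> norm (2 *\<^sub>R (\<Sum>i<n. y i))"
        proof (rule norm_mono)
          have "lat_abs (\<Sum>l<N. t' l *\<^sub>R u l) = (\<Sum>l<N. \<bar>t' l\<bar> *\<^sub>R lat_abs (u l))" by (rule abs_sum_disj[OF ud])
          also have "\<dots> \<le> (\<Sum>l<N. if l < n then 2 *\<^sub>R lat_abs (y l) else 0)"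
          proof (rule sum_mono')
            fix l assume lN: "l \<in> {..<N}"
            show "\<bar>t' l\<bar> *\<^sub>R lat_abs (u l) \<le> (if l < n then 2 *\<^sub>R lat_abs (y l) else 0)"
            proof (cases "l < n")
              case True
              have xl: "0 \<le> x l" "x l \<le> lat_abs (y l)" "x l \<noteq> 0" using xz(1) xnz True by auto
              have "\<bar>t' l\<bar> *\<^sub>R lat_abs (u l) = (t l / norm (x l)) *\<^sub>R x l"
                using True xl by (simp add: t'_def u_def v_def abs_scale abs_of_nonneg' t_def)
              also have "\<dots> \<le> 2 *\<^sub>R x l" using xn[OF True] xl by (intro scale_le_scale) (auto simp: divide_le_eq)
              also have "\<dots> \<le> 2 *\<^sub>R lat_abs (y l)" using xl by (intro scale_mono) auto
              finally show ?thesis using True by simp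
            next
              case False
              then show ?thesis by (simp add: t'_def)
            qed
          qed
          also have "\<dots> \<le> (\<Sum>l<n. 2 *\<^sub>R lat_abs (y l))"
          proof -
            have "(\<Sum>l<N. if l < n then 2 *\<^sub>R lat_abs (y l) else 0) = (\<Sum>l\<in>{..<N} \<inter> {..<n}. 2 *\<^sub>R lat_abs (y l))"
              by (simp add: sum.inter_restrict)
            also have "\<dots> \<le> (\<Sum>l<n. 2 *\<^sub>R lat_abs (y l))"
              by (rule sum_subset_le') (auto intro: scale_nonneg)
            finally show ?thesis .
          qed
          also have "\<dots> = 2 *\<^sub>R lat_abs (\<Sum>i<n. y i)"
            using E2[of "{..<n}" y] yd by (simp add: pw_disj_def scaleR_sum_right)
          also have "\<dots> = lat_abs (2 *\<^sub>R (\<Sum>i<n. y i))" by (simp add: abs_scale)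
          finally show "lat_abs (\<Sum>l<N. t' l *\<^sub>R u l) \<le> lat_abs (2 *\<^sub>R (\<Sum>i<n. y i))" .
        qed
        also have "\<dots> = 2 * norm (\<Sum>i<n. y i)" by simp
        finally show ?thesis .
      qed
      then show ?thesis using XL_norm_le by blast
    qed
    have "(\<Sum>i<n. norm (y i) powr q) powr (1 / q) \<le> (\<Sum>i<n. XL_norm T (e i) powr q) powr (1 / q)"
      by (intro powr_sum_mono qp) (use eN in \<open>auto simp: t_def\<close>)
    also have "\<dots> \<le> M * XL_norm T t'" using M[of n e] eS ed te by auto
    also have "\<dots> \<le> M' * XL_norm T t'" unfolding M'_def by (intro mult_right_mono XL_norm_nonneg) auto
    also have "\<dots> \<le> M' * (2 * norm (\<Sum>i<n. y i))" using t'b M'_def by (intro mult_left_mono) auto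
    finally show "(\<Sum>i<n. norm (y i) powr q) powr (1 / q) \<le> 2 * M' * norm (\<Sum>i<n. y i)" by simp
  qed
qed

end

theorem mainTheorem9:
  assumes "banach_lattice TYPE('a::{banach,lattice})"
    and "infinite_dimensional TYPE('a)"
  shows "delta_ind (XU_space TYPE('a)) (XU_norm TYPE('a)) = delta_ind (UNIV::'a set) norm
       \<and> sigma_ind (XL_space TYPE('a)) (XL_norm TYPE('a)) = sigma_ind (UNIV::'a set) norm"
proof -
  interpret BLI "TYPE('a)" using assms by (unfold_locales) auto
  have "{ereal p | p. 1 \<le> p \<and> upper_est (XU_space TYPE('a)) (XU_norm TYPE('a)) p}
      = {ereal p | p. 1 \<le> p \<and> upper_est (UNIV::'a set) norm p}"
    using U1 U2 by blast
  moreover have "{ereal q | q. 1 \<le> q \<and> lower_est (XL_space TYPE('a)) (XL_norm TYPE('a)) q}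
      = {ereal q | q. 1 \<le> q \<and> lower_est (UNIV::'a set) norm q}"
    using L1 L2 by blast
  ultimately show ?thesis unfolding delta_ind_def sigma_ind_def by simp
qed

end
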